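(* Let $G$ be a finite group and $M\cong\mathbb{Z}^d$ a $G$-module with faithful $G$-action, with $G$ identified with its image in $\mathrm{Aut}(M)\subseteq\mathrm{Aut}(\widehat M)$. Let $q\ge3$ be an integer such that the exponent of $H^2(G,M)$ divides $q$. Then there is a natural exact sequence \[H^1(G,\widehat M)\to H^1(G,M/qM)\to H^2(G,\widehat M)\to 0,\] compatible with the natural actions of $\mathcal{N}_{\mathrm{Aut}(\widehat M)}(G)$, and consequently every element of $\mathcal{N}_{\mathrm{Aut}(\widehat M)}(G)\cap\ker\big(\mathrm{Aut}(\widehat M)\to\mathrm{Aut}(M/qM)\big)$ acts trivially on $H^2(G,\widehat M)$.
   Context: $\widehat M$ is the profinite completion of $M$ with induced $G$-action; $\mathcal{N}_H(K)$ denotes the normalizer. For $N$ equal to $\widehat M$ or $M/qM$, an element $\phi\in\mathcal{N}_{\mathrm{Aut}(\widehat M)}(G)$ acts on an $n$-cocycle $\zeta\colon G^n\to N$ by $(\phi\cdot\zeta)(g_1,\dots,g_n)=\phi(\zeta(\phi^{-1}g_1\phi,\dots,\phi^{-1}g_n\phi))$, where $\phi$ acts on $M/qM$ through the reduction $\mathrm{Aut}(\widehat M)\to\mathrm{Aut}(M/qM)$; this induces actions on cohomology. *)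

theory Defs
  imports "HOL-Analysis.Analysis"
begin

text \<open>The finite group G is identified with its (faithful) image in
Aut(M) = GL_d(Z): G is a finite set of d x d integer matrices forming a group under
matrix multiplication, and M = Z^d = int^'d with g acting by g *v v.
M/qM is represented by the vectors with all coordinates reduced into [0,q).
The profinite completion Mhat = lim M/nM is represented by compatible families
x n (n > 0) of canonically reduced vectors, x 0 = 0.
Group cohomology of the finite group G uses inhomogeneous cochains.\<close>

record ('a, 'g) gmodule =
  mcar :: "'a set"
  madd :: "'a \<Rightarrow> 'a \<Rightarrow> 'a"
  mneg :: "'a \<Rightarrow> 'a"
  mact :: "'g \<Rightarrow> 'a \<Rightarrow> 'a"

definition msub :: "('a, 'g, 'z) gmodule_scheme \<Rightarrow> 'a \<Rightarrow> 'a \<Rightarrow> 'a" where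
  "msub A x y = madd A x (mneg A y)"

definition vmod :: "int^'d \<Rightarrow> int \<Rightarrow> int^'d" where
  "vmod v n = (\<chi> i. v $ i mod n)"

definition Mint :: "(int^'d, int^'d^'d) gmodule" where
  "Mint = \<lparr>mcar = UNIV, madd = (+), mneg = uminus, mact = (\<lambda>g v. g *v v)\<rparr>"

definition Mq :: "nat \<Rightarrow> (int^'d, int^'d^'d) gmodule" where
  "Mq q = \<lparr>mcar = {v. vmod v (int q) = v},
           madd = (\<lambda>v w. vmod (v + w) (int q)),
           mneg = (\<lambda>v. vmod (- v) (int q)),
           mact = (\<lambda>g v. vmod (g *v v) (int q))\<rparr>"

definition Mhat_car :: "(nat \<Rightarrow> int^'d) set" where
  "Mhat_car = {x. x 0 = 0 \<and> (\<forall>n>0. vmod (x n) (int n) = x n)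
                \<and> (\<forall>m n. 0 < m \<longrightarrow> 0 < n \<longrightarrow> m dvd n \<longrightarrow> vmod (x n) (int m) = x m)}"

definition hadd :: "(nat \<Rightarrow> int^'d) \<Rightarrow> (nat \<Rightarrow> int^'d) \<Rightarrow> (nat \<Rightarrow> int^'d)" where
  "hadd x y = (\<lambda>n. if n = 0 then 0 else vmod (x n + y n) (int n))"

definition hneg :: "(nat \<Rightarrow> int^'d) \<Rightarrow> (nat \<Rightarrow> int^'d)" where
  "hneg x = (\<lambda>n. if n = 0 then 0 else vmod (- x n) (int n))"

definition hact :: "int^'d^'d \<Rightarrow> (nat \<Rightarrow> int^'d) \<Rightarrow> (nat \<Rightarrow> int^'d)" where
  "hact g x = (\<lambda>n. if n = 0 then 0 else vmod (g *v x n) (int n))"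

definition hscal :: "nat \<Rightarrow> (nat \<Rightarrow> int^'d) \<Rightarrow> (nat \<Rightarrow> int^'d)" where
  "hscal q x = (\<lambda>n. if n = 0 then 0 else vmod (int q *s x n) (int n))"

definition Mhat :: "(nat \<Rightarrow> int^'d, int^'d^'d) gmodule" where
  "Mhat = \<lparr>mcar = Mhat_car, madd = hadd, mneg = hneg, mact = hact\<rparr>"

text \<open>Canonical lift M -> Mhat (used to lift elements of M/qM) and
division by q in Mhat (multiplication by q is injective on Mhat).\<close>

definition hiota :: "int^'d \<Rightarrow> (nat \<Rightarrow> int^'d)" where
  "hiota v = (\<lambda>n. if n = 0 then 0 else vmod v (int n))"

definition hdiv :: "nat \<Rightarrow> (nat \<Rightarrow> int^'d) \<Rightarrow> (nat \<Rightarrow> int^'d)" where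
  "hdiv q y = (THE x. x \<in> Mhat_car \<and> hscal q x = y)"

definition d1 :: "('a, int^'d^'d, 'z) gmodule_scheme \<Rightarrow> (int^'d^'d \<Rightarrow> 'a)
                   \<Rightarrow> int^'d^'d \<Rightarrow> int^'d^'d \<Rightarrow> 'a" where
  "d1 A c g h = madd A (msub A (mact A g (c h)) (c (g ** h))) (c g)"

definition cocycle1 :: "(int^'d^'d) set \<Rightarrow> ('a, int^'d^'d, 'z) gmodule_scheme
                        \<Rightarrow> (int^'d^'d \<Rightarrow> 'a) \<Rightarrow> bool" where
  "cocycle1 G A f \<longleftrightarrow> (\<forall>g\<in>G. f g \<in> mcar A)
     \<and> (\<forall>g\<in>G. \<forall>h\<in>G. f (g ** h) = madd A (f g) (mact A g (f h)))"

definition coboundary1 :: "(int^'d^'d) set \<Rightarrow> ('a, int^'d^'d, 'z) gmodule_scheme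
                        \<Rightarrow> (int^'d^'d \<Rightarrow> 'a) \<Rightarrow> bool" where
  "coboundary1 G A f \<longleftrightarrow> (\<exists>a\<in>mcar A. \<forall>g\<in>G. f g = msub A (mact A g a) a)"

definition cohomologous1 :: "(int^'d^'d) set \<Rightarrow> ('a, int^'d^'d, 'z) gmodule_scheme
                        \<Rightarrow> (int^'d^'d \<Rightarrow> 'a) \<Rightarrow> (int^'d^'d \<Rightarrow> 'a) \<Rightarrow> bool" where
  "cohomologous1 G A f f' \<longleftrightarrow> coboundary1 G A (\<lambda>g. msub A (f g) (f' g))"

definition cocycle2 :: "(int^'d^'d) set \<Rightarrow> ('a, int^'d^'d, 'z) gmodule_scheme
                        \<Rightarrow> (int^'d^'d \<Rightarrow> int^'d^'d \<Rightarrow> 'a) \<Rightarrow> bool" where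
  "cocycle2 G A f \<longleftrightarrow> (\<forall>g\<in>G. \<forall>h\<in>G. f g h \<in> mcar A)
     \<and> (\<forall>g\<in>G. \<forall>h\<in>G. \<forall>k\<in>G.
          madd A (mact A g (f h k)) (f g (h ** k)) = madd A (f (g ** h) k) (f g h))"

definition coboundary2 :: "(int^'d^'d) set \<Rightarrow> ('a, int^'d^'d, 'z) gmodule_scheme
                        \<Rightarrow> (int^'d^'d \<Rightarrow> int^'d^'d \<Rightarrow> 'a) \<Rightarrow> bool" where
  "coboundary2 G A f \<longleftrightarrow> (\<exists>c. (\<forall>g\<in>G. c g \<in> mcar A) \<and> (\<forall>g\<in>G. \<forall>h\<in>G. f g h = d1 A c g h))"

definition cohomologous2 :: "(int^'d^'d) set \<Rightarrow> ('a, int^'d^'d, 'z) gmodule_scheme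
       \<Rightarrow> (int^'d^'d \<Rightarrow> int^'d^'d \<Rightarrow> 'a) \<Rightarrow> (int^'d^'d \<Rightarrow> int^'d^'d \<Rightarrow> 'a) \<Rightarrow> bool" where
  "cohomologous2 G A f f' \<longleftrightarrow> coboundary2 G A (\<lambda>g h. msub A (f g h) (f' g h))"

definition redq :: "nat \<Rightarrow> (int^'d^'d \<Rightarrow> nat \<Rightarrow> int^'d) \<Rightarrow> (int^'d^'d \<Rightarrow> int^'d)" where
  "redq q f = (\<lambda>g. f g q)"

text \<open>Connecting map H^1(G,M/qM) -> H^2(G,Mhat) of 0 -> Mhat --q--> Mhat -> M/qM -> 0:
lift, take the coboundary, divide by q.\<close>
definition beta :: "nat \<Rightarrow> (int^'d^'d \<Rightarrow> int^'d) \<Rightarrow> (int^'d^'d \<Rightarrow> int^'d^'d \<Rightarrow> nat \<Rightarrow> int^'d)" where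
  "beta q z = (\<lambda>g h. hdiv q (d1 Mhat (\<lambda>k. hiota (z k)) g h))"

definition hcont :: "((nat \<Rightarrow> int^'d) \<Rightarrow> (nat \<Rightarrow> int^'d)) \<Rightarrow> bool" where
  "hcont \<phi> \<longleftrightarrow> (\<forall>n>0. \<exists>m>0. \<forall>x\<in>Mhat_car. \<forall>y\<in>Mhat_car. x m = y m \<longrightarrow> \<phi> x n = \<phi> y n)"

text \<open>Automorphisms of the profinite group Mhat (topological group automorphisms).\<close>
definition AutMhat :: "((nat \<Rightarrow> int^'d) \<Rightarrow> (nat \<Rightarrow> int^'d)) set" where
  "AutMhat = {\<phi>. bij_betw \<phi> Mhat_car Mhat_car
      \<and> (\<forall>x\<in>Mhat_car. \<forall>y\<in>Mhat_car. \<phi> (hadd x y) = hadd (\<phi> x) (\<phi> y))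
      \<and> hcont \<phi> \<and> hcont (inv_into Mhat_car \<phi>)}"

text \<open>Normalizer of G (acting via hact) in Aut(Mhat):  phi^-1 G phi = G.\<close>
definition NAut :: "(int^'d^'d) set \<Rightarrow> ((nat \<Rightarrow> int^'d) \<Rightarrow> (nat \<Rightarrow> int^'d)) set" where
  "NAut G = {\<phi> \<in> AutMhat.
      (\<forall>g\<in>G. \<exists>g'\<in>G. \<forall>x\<in>Mhat_car. \<phi> (hact g' x) = hact g (\<phi> x))
    \<and> (\<forall>g'\<in>G. \<exists>g\<in>G. \<forall>x\<in>Mhat_car. \<phi> (hact g' x) = hact g (\<phi> x))}"

text \<open>conjG G phi g = phi^-1 g phi (an element of G for phi in the normalizer).\<close>
definition conjG :: "(int^'d^'d) set \<Rightarrow> ((nat \<Rightarrow> int^'d) \<Rightarrow> (nat \<Rightarrow> int^'d)) \<Rightarrow> int^'d^'d \<Rightarrow> int^'d^'d" where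
  "conjG G \<phi> g = (THE g'. g' \<in> G \<and> (\<forall>x\<in>Mhat_car. \<phi> (hact g' x) = hact g (\<phi> x)))"

definition phiq :: "nat \<Rightarrow> ((nat \<Rightarrow> int^'d) \<Rightarrow> (nat \<Rightarrow> int^'d)) \<Rightarrow> int^'d \<Rightarrow> int^'d" where
  "phiq q \<phi> v = \<phi> (hiota v) q"

definition act1hat where
  "act1hat G \<phi> f = (\<lambda>g. \<phi> (f (conjG G \<phi> g)))"

definition act2hat where
  "act2hat G \<phi> f = (\<lambda>g h. \<phi> (f (conjG G \<phi> g) (conjG G \<phi> h)))"

definition act1q where
  "act1q q G \<phi> f = (\<lambda>g. phiq q \<phi> (f (conjG G \<phi> g)))"

end

theory Submission
  imports Defs "HOL-Computational_Algebra.Primes"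
begin

lemma vmod_nth[simp]: "vmod u n $ i = u $ i mod n"
  by (simp add: vmod_def)

lemma vmod_vmod[simp]: "vmod (vmod u n) n = vmod u n"
  by (simp add: vec_eq_iff)
lemma vmod_add_l[simp]: "vmod (vmod u n + v) n = vmod (u + v) n"
  by (simp add: vec_eq_iff mod_add_left_eq)
lemma vmod_add_r[simp]: "vmod (u + vmod v n) n = vmod (u + v) n"
  by (simp add: vec_eq_iff mod_add_right_eq)
lemma vmod_diff_l[simp]: "vmod (vmod u n - v) n = vmod (u - v) n"
  by (simp add: vec_eq_iff mod_diff_left_eq)
lemma vmod_diff_r[simp]: "vmod (u - vmod v n) n = vmod (u - v) n"
  by (simp add: vec_eq_iff mod_diff_right_eq)
lemma vmod_neg[simp]: "vmod (- vmod u n) n = vmod (- u) n"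
  by (simp add: vec_eq_iff mod_minus_eq)
lemma vmod_smul[simp]: "vmod (k *s vmod u n) n = vmod (k *s u) n"
  by (simp add: vec_eq_iff mod_mult_right_eq)
lemma vmod_mv[simp]: "vmod (A *v vmod u n) n = vmod (A *v u) n"
proof -
  have "(\<Sum>j\<in>UNIV. A $ i $ j * (u $ j mod n)) mod n = (\<Sum>j\<in>UNIV. A $ i $ j * u $ j) mod n" for i
  proof -
    have "(\<Sum>j\<in>UNIV. A $ i $ j * (u $ j mod n)) mod n = (\<Sum>j\<in>UNIV. (A $ i $ j * (u $ j mod n)) mod n) mod n"
      by (simp add: mod_sum_eq)
    also have "\<dots> = (\<Sum>j\<in>UNIV. (A $ i $ j * u $ j) mod n) mod n"
      by (simp add: mod_mult_right_eq)
    also have "\<dots> = (\<Sum>j\<in>UNIV. A $ i $ j * u $ j) mod n" by (simp add: mod_sum_eq)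
    finally show ?thesis .
  qed
  then show ?thesis by (simp add: vec_eq_iff matrix_vector_mult_def)
qed
lemma vmod_dvd: "m dvd n \<Longrightarrow> vmod (vmod u n) m = vmod u m"
  by (simp add: vec_eq_iff mod_mod_cancel)
lemma vmod_zero[simp]: "vmod 0 n = 0"
  by (simp add: vec_eq_iff)

lemma mv_neg: "(A::int^'n^'m) *v (- x) = - (A *v x)"
  by (simp add: vec_eq_iff matrix_vector_mult_def sum_negf)
lemma mv_smul: "(A::int^'n^'m) *v (k *s x) = k *s (A *v x)"
  by (simp add: vec_eq_iff matrix_vector_mult_def sum_distrib_left mult_ac)

lemma MhatI:
  assumes "x 0 = 0" "\<And>n. n>0 \<Longrightarrow> vmod (x n) (int n) = x n"
    "\<And>m n. 0<m \<Longrightarrow> 0<n \<Longrightarrow> m dvd n \<Longrightarrow> vmod (x n) (int m) = x m"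
  shows "x \<in> Mhat_car"
  using assms unfolding Mhat_car_def by blast

lemma Mhat_red: "x \<in> Mhat_car \<Longrightarrow> 0<n \<Longrightarrow> vmod (x n) (int n) = x n"
  unfolding Mhat_car_def by blast
lemma Mhat_compat: "x \<in> Mhat_car \<Longrightarrow> 0<m \<Longrightarrow> 0<n \<Longrightarrow> m dvd n \<Longrightarrow> vmod (x n) (int m) = x m"
  unfolding Mhat_car_def by blast
lemma Mhat_0: "x \<in> Mhat_car \<Longrightarrow> x 0 = 0"
  unfolding Mhat_car_def by blast
lemma Mhat_eqI: assumes "x \<in> Mhat_car" "y \<in> Mhat_car" "\<And>n. n>0 \<Longrightarrow> x n = y n" shows "x = y"
proof (rule ext)
  fix n show "x n = y n" using assms by (cases "n=0") (auto simp: Mhat_0)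
qed

lemma Mhat_levelwise:
  assumes cong: "\<And>m n. 0<m \<Longrightarrow> 0<n \<Longrightarrow> m dvd n \<Longrightarrow> vmod (F n) (int m) = vmod (F m) (int m)"
  shows "(\<lambda>n. if n = 0 then 0 else vmod (F n) (int n)) \<in> Mhat_car"
proof (rule MhatI)
  fix m n :: nat assume "0<m" "0<n" "m dvd n"
  then have "int m dvd int n" by simp
  then show "vmod ((\<lambda>n. if n = 0 then 0 else vmod (F n) (int n)) n) (int m) =
     (\<lambda>n. if n = 0 then 0 else vmod (F n) (int n)) m"
    using \<open>0<m\<close> \<open>0<n\<close> cong[OF \<open>0<m\<close> \<open>0<n\<close> \<open>m dvd n\<close>] by (simp add: vmod_dvd)
qed simp_all

lemma cong_lift: "m dvd n \<Longrightarrow> vmod a m = vmod a' m \<Longrightarrow> vmod b m = vmod b' m \<Longrightarrow> True" by simp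

lemma hadd_in: assumes "x \<in> Mhat_car" "y \<in> Mhat_car" shows "hadd x y \<in> Mhat_car"
  unfolding hadd_def
proof (rule Mhat_levelwise)
  fix m n :: nat assume h: "0<m" "0<n" "m dvd n"
  have "vmod (x n + y n) (int m) = vmod (vmod (x n) (int m) + vmod (y n) (int m)) (int m)" by simp
  also have "\<dots> = vmod (x m + y m) (int m)" using assms h by (simp add: Mhat_compat)
  finally show "vmod (x n + y n) (int m) = vmod (x m + y m) (int m)" .
qed

lemma hneg_in: assumes "x \<in> Mhat_car" shows "hneg x \<in> Mhat_car"
  unfolding hneg_def
proof (rule Mhat_levelwise)
  fix m n :: nat assume h: "0<m" "0<n" "m dvd n"
  have "vmod (- x n) (int m) = vmod (- vmod (x n) (int m)) (int m)" by simp
  also have "\<dots> = vmod (- x m) (int m)" using assms h by (simp add: Mhat_compat)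
  finally show "vmod (- x n) (int m) = vmod (- x m) (int m)" .
qed

lemma hact_in: assumes "x \<in> Mhat_car" shows "hact g x \<in> Mhat_car"
  unfolding hact_def
proof (rule Mhat_levelwise)
  fix m n :: nat assume h: "0<m" "0<n" "m dvd n"
  have "vmod (g *v x n) (int m) = vmod (g *v vmod (x n) (int m)) (int m)" by simp
  also have "\<dots> = vmod (g *v x m) (int m)" using assms h by (simp add: Mhat_compat)
  finally show "vmod (g *v x n) (int m) = vmod (g *v x m) (int m)" .
qed

lemma hscal_in: assumes "x \<in> Mhat_car" shows "hscal k x \<in> Mhat_car"
  unfolding hscal_def
proof (rule Mhat_levelwise)
  fix m n :: nat assume h: "0<m" "0<n" "m dvd n"
  have "vmod (int k *s x n) (int m) = vmod (int k *s vmod (x n) (int m)) (int m)" by simp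
  also have "\<dots> = vmod (int k *s x m) (int m)" using assms h by (simp add: Mhat_compat)
  finally show "vmod (int k *s x n) (int m) = vmod (int k *s x m) (int m)" .
qed

lemma hiota_in: "hiota v \<in> Mhat_car"
  unfolding hiota_def by (rule Mhat_levelwise) (simp add: vmod_dvd)

lemma hzero_in: "(\<lambda>n. 0) \<in> Mhat_car"
  unfolding Mhat_car_def by simp


lemma hadd_at[simp]: "0<n \<Longrightarrow> hadd x y n = vmod (x n + y n) (int n)" by (simp add: hadd_def)
lemma hneg_at[simp]: "0<n \<Longrightarrow> hneg x n = vmod (- x n) (int n)" by (simp add: hneg_def)
lemma hact_at[simp]: "0<n \<Longrightarrow> hact g x n = vmod (g *v x n) (int n)" by (simp add: hact_def)
lemma hscal_at[simp]: "0<n \<Longrightarrow> hscal k x n = vmod (int k *s x n) (int n)" by (simp add: hscal_def)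
lemma hiota_at[simp]: "0<n \<Longrightarrow> hiota v n = vmod v (int n)" by (simp add: hiota_def)

typedef ('d::finite) mh = "Mhat_car :: (nat \<Rightarrow> int^'d) set"
  using hzero_in by blast

setup_lifting type_definition_mh

instantiation mh :: (finite) ab_group_add
begin
lift_definition zero_mh :: "'a mh" is "\<lambda>n. 0" by (rule hzero_in)
lift_definition plus_mh :: "'a mh \<Rightarrow> 'a mh \<Rightarrow> 'a mh" is hadd by (rule hadd_in)
lift_definition uminus_mh :: "'a mh \<Rightarrow> 'a mh" is hneg by (rule hneg_in)
definition minus_mh :: "'a mh \<Rightarrow> 'a mh \<Rightarrow> 'a mh" where "minus_mh x y = x + - y"
instance
proof
  fix a b c :: "'a mh"
  show "a + b + c = a + (b + c)"
    by transfer (rule Mhat_eqI, auto intro!: hadd_in simp: add.assoc)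
  show "a + b = b + a"
    by transfer (rule Mhat_eqI, auto intro!: hadd_in simp: add.commute)
  show "0 + a = a"
    by transfer (rule Mhat_eqI, auto intro!: hadd_in hzero_in simp: Mhat_red)
  show "- a + a = 0"
    by transfer (rule Mhat_eqI, auto intro!: hadd_in hneg_in hzero_in)
  show "a - b = a + - b" by (simp add: minus_mh_def)
qed
end

lift_definition act :: "int^'d^'d \<Rightarrow> ('d::finite) mh \<Rightarrow> 'd mh" is hact by (rule hact_in)
lift_definition hs :: "nat \<Rightarrow> ('d::finite) mh \<Rightarrow> 'd mh" is hscal by (rule hscal_in)
lift_definition io :: "int^'d \<Rightarrow> ('d::finite) mh" is hiota by (rule hiota_in)
lift_definition lev :: "nat \<Rightarrow> ('d::finite) mh \<Rightarrow> int^'d" is "\<lambda>n x. x n" .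

lemma mh_eq_iff: "(x::'d::finite mh) = y \<longleftrightarrow> (\<forall>n>0. lev n x = lev n y)"
  by transfer (auto intro: Mhat_eqI)

lemma lev_red[simp]: "0<n \<Longrightarrow> vmod (lev n x) (int n) = lev n x"
  by transfer (rule Mhat_red)
lemma lev_add[simp]: "0<n \<Longrightarrow> lev n (x + y) = vmod (lev n x + lev n y) (int n)"
  by transfer simp
lemma lev_minus[simp]: "0<n \<Longrightarrow> lev n (- x) = vmod (- lev n x) (int n)"
  by transfer simp
lemma lev_diff[simp]: "0<n \<Longrightarrow> lev n (x - y) = vmod (lev n x - lev n y) (int n)"
proof -
  assume n: "0<n"
  show ?thesis
    by (simp only: diff_conv_add_uminus[of x y] lev_add[OF n] lev_minus[OF n] vmod_add_r
       diff_conv_add_uminus[of "lev n x" "lev n y"])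
qed
lemma lev_zero[simp]: "lev n 0 = 0"
  by transfer simp
lemma lev_act[simp]: "0<n \<Longrightarrow> lev n (act g x) = vmod (g *v lev n x) (int n)"
  by transfer simp
lemma lev_hs[simp]: "0<n \<Longrightarrow> lev n (hs k x) = vmod (int k *s lev n x) (int n)"
  by transfer simp
lemma lev_io[simp]: "0<n \<Longrightarrow> lev n (io v) = vmod v (int n)"
  by transfer simp
lemma lev_compat: "0<m \<Longrightarrow> 0<n \<Longrightarrow> m dvd n \<Longrightarrow> vmod (lev n x) (int m) = lev m x"
  by transfer (rule Mhat_compat)

lemma act_add[simp]: "act g (x + y) = act g x + act g y"
  by (simp add: mh_eq_iff algebra_simps)
lemma act_minus[simp]: "act g (- x) = - act g x"
  by (simp add: mh_eq_iff mv_neg)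
lemma act_diff[simp]: "act g (x - y) = act g x - act g y"
  by (simp only: diff_conv_add_uminus act_add act_minus)
lemma act_zero[simp]: "act g 0 = 0"
  by (simp add: mh_eq_iff)
lemma act_act[simp]: "act g (act h x) = act (g ** h) x"
  by (simp add: mh_eq_iff matrix_vector_mul_assoc)
lemma act_one[simp]: "act (mat 1) x = x"
  by (simp add: mh_eq_iff)
lemma hs_add[simp]: "hs k (x + y) = hs k x + hs k y"
  by (simp add: mh_eq_iff vector_add_ldistrib)
lemma hs_minus[simp]: "hs k (- x) = - hs k x"
  by (simp add: mh_eq_iff vector_smult_rneg)
lemma hs_diff[simp]: "hs k (x - y) = hs k x - hs k y"
  by (simp only: diff_conv_add_uminus hs_add hs_minus)
lemma hs_zero[simp]: "hs k 0 = 0"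
  by (simp add: mh_eq_iff)
lemma hs_act[simp]: "hs k (act g x) = act g (hs k x)"
  by (simp add: mh_eq_iff mv_smul)
lemma hs_hs[simp]: "hs k (hs l x) = hs (k*l) x"
  by (simp add: mh_eq_iff vector_smult_assoc)
lemma hs_0[simp]: "hs 0 x = 0"
  by (simp add: mh_eq_iff)
lemma hs_Suc: "hs (Suc k) x = hs k x + x"
  by (simp add: mh_eq_iff vec_eq_iff algebra_simps)
lemma hs_1[simp]: "hs 1 x = x"
  by (simp add: mh_eq_iff)
lemma io_add[simp]: "io (u + v) = io u + io v"
  by (simp add: mh_eq_iff)
lemma io_minus[simp]: "io (- u) = - io u"
  by (simp add: mh_eq_iff)
lemma io_diff[simp]: "io (u - v) = io u - io v"
  by (simp add: mh_eq_iff)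
lemma io_zero[simp]: "io 0 = 0"
  by (simp add: mh_eq_iff)
lemma io_mv[simp]: "io (g *v v) = act g (io v)"
  by (simp add: mh_eq_iff)
lemma io_smul[simp]: "io (int k *s v) = hs k (io v)"
  by (simp add: mh_eq_iff)


lemma hs_inj: assumes k: "0<k" and e: "hs k x = hs k y" shows "x = y"
proof (unfold mh_eq_iff, intro allI impI)
  fix n :: nat assume n: "0<n"
  have kn: "0 < k*n" using k n by simp
  have "lev (k*n) (hs k x) = lev (k*n) (hs k y)" using e by simp
  then have "vmod (int k *s lev (k*n) x) (int (k*n)) = vmod (int k *s lev (k*n) y) (int (k*n))"
    using kn by simp
  then have "\<forall>i. (int k * lev (k*n) x $ i) mod (int k * int n) = (int k * lev (k*n) y $ i) mod (int k * int n)"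
    by (simp add: vec_eq_iff)
  then have "\<forall>i. lev (k*n) x $ i mod int n = lev (k*n) y $ i mod int n"
    using k by (simp add: mod_mult_mult1)
  then have "vmod (lev (k*n) x) (int n) = vmod (lev (k*n) y) (int n)" by (simp add: vec_eq_iff)
  then show "lev n x = lev n y" using lev_compat[of n "k*n" x] lev_compat[of n "k*n" y] n kn by simp
qed

lemma raw_div: assumes x: "x \<in> Mhat_car" and k: "0<k" and xk: "x k = 0"
  shows "\<exists>y\<in>Mhat_car. hscal k y = x"
proof -
  define F where "F n = (\<chi> i. x (k*n) $ i div int k)" for n
  have dk: "\<And>n. 0<n \<Longrightarrow> x (k*n) $ i mod int k = 0" for i
  proof -
    fix n :: nat assume n: "0<n"
    have "vmod (x (k*n)) (int k) = x k" using Mhat_compat[OF x k, of "k*n"] n k by simp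
    then have "vmod (x (k*n)) (int k) $ i = x k $ i" by simp
    then show "x (k*n) $ i mod int k = 0" using xk by simp
  qed
  have key: "(x (k*n) $ i div int k) mod int m = (x (k*m) $ i div int k) mod int m"
    if h: "0<m" "0<n" "m dvd n" for m n i
  proof -
    have "int k dvd x (k*n) $ i" using dk[OF h(2)] by (rule mod_0_imp_dvd)
    then obtain a where a: "x (k*n) $ i = int k * a" by (auto elim: dvdE)
    have "int k dvd x (k*m) $ i" using dk[OF h(1)] by (rule mod_0_imp_dvd)
    then obtain b where b: "x (k*m) $ i = int k * b" by (auto elim: dvdE)
    have "vmod (x (k*n)) (int (k*m)) = x (k*m)"
      using Mhat_compat[OF x, of "k*m" "k*n"] h k by simp
    then have "vmod (x (k*n)) (int (k*m)) $ i = x (k*m) $ i" by simp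
    then have e1: "x (k*n) $ i mod (int k * int m) = x (k*m) $ i" by simp
    have "vmod (x (k*m)) (int (k*m)) = x (k*m)" using Mhat_red[OF x, of "k*m"] h k by simp
    then have "vmod (x (k*m)) (int (k*m)) $ i = x (k*m) $ i" by simp
    then have e2: "x (k*m) $ i mod (int k * int m) = x (k*m) $ i" by simp
    from e1 a b have "int k * (a mod int m) = int k * b" by (simp add: mod_mult_mult1)
    then have "a mod int m = b" using k by simp
    moreover from e2 b have "int k * (b mod int m) = int k * b" by (simp add: mod_mult_mult1)
    then have "b mod int m = b" using k by simp
    ultimately show ?thesis using a b k by simp
  qed
  define y where "y = (\<lambda>n. if n = 0 then 0 else vmod (F n) (int n))"
  have yin: "y \<in> Mhat_car" unfolding y_def
  proof (rule Mhat_levelwise)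
    fix m n :: nat assume h: "0<m" "0<n" "m dvd n"
    show "vmod (F n) (int m) = vmod (F m) (int m)"
      unfolding vec_eq_iff F_def vmod_nth using key[OF h] by simp
  qed
  have "hscal k y = x"
  proof (rule Mhat_eqI[OF hscal_in[OF yin] x])
    fix n :: nat assume n: "0<n"
    have "int k *s F n = x (k*n)" using dk[OF n] k
      by (simp add: F_def vec_eq_iff mod_0_imp_dvd)
    then have "hscal k y n = vmod (x (k*n)) (int n)" using n by (simp add: y_def)
    also have "\<dots> = x n" using Mhat_compat[OF x n, of "k*n"] n k by simp
    finally show "hscal k y n = x n" .
  qed
  then show ?thesis using yin by blast
qed

lemma hs_div: assumes k: "0<k" and z: "lev k x = 0" shows "\<exists>y. x = hs k y"
proof -
  have "Rep_mh x \<in> Mhat_car" "Rep_mh x k = 0" using Rep_mh z by (auto simp: lev.rep_eq)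
  then obtain y where y: "y \<in> Mhat_car" "hscal k y = Rep_mh x" using raw_div k by blast
  have "hs k (Abs_mh y) = x"
    using y by (simp add: hs.abs_eq eq_onp_same_args Rep_mh_inverse)
  then show ?thesis by (intro exI[of _ "Abs_mh y"]) simp
qed

lemma hs_divides_iff: "0<k \<Longrightarrow> (\<exists>y. x = hs k y) \<longleftrightarrow> lev k x = 0"
  using hs_div[of k x] by (auto simp: vec_eq_iff)


definition td1 :: "(int^'d^'d \<Rightarrow> 'd::finite mh) \<Rightarrow> int^'d^'d \<Rightarrow> int^'d^'d \<Rightarrow> 'd mh" where
  "td1 c g h = act g (c h) - c (g ** h) + c g"

definition qdiv :: "nat \<Rightarrow> 'd::finite mh \<Rightarrow> bool" where
  "qdiv k x \<longleftrightarrow> (\<exists>w. x = hs k w)"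

lemma qdiv_add: "qdiv k x \<Longrightarrow> qdiv k y \<Longrightarrow> qdiv k (x + y)"
  unfolding qdiv_def by (metis hs_add)
lemma qdiv_diff: "qdiv k x \<Longrightarrow> qdiv k y \<Longrightarrow> qdiv k (x - y)"
  unfolding qdiv_def by (metis hs_diff)
lemma qdiv_minus: "qdiv k x \<Longrightarrow> qdiv k (- x)"
  unfolding qdiv_def by (metis hs_minus)
lemma qdiv_act: "qdiv k x \<Longrightarrow> qdiv k (act g x)"
  unfolding qdiv_def by (metis hs_act)
lemma qdiv_zero: "qdiv k 0"
  unfolding qdiv_def by (metis hs_zero)
lemma qdiv_hs: "qdiv k (hs k w)"
  unfolding qdiv_def by blast
lemma qdiv_iff: "0<k \<Longrightarrow> qdiv k x \<longleftrightarrow> lev k x = 0"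
  unfolding qdiv_def using hs_divides_iff by blast

lemma vmod_eq_iff: "vmod u n = vmod v n \<longleftrightarrow> vmod (u - v) n = 0"
  by (simp add: vec_eq_iff mod_eq_dvd_iff dvd_eq_mod_eq_0)

lemma lev_eq_iff: "0<k \<Longrightarrow> lev k x = lev k y \<longleftrightarrow> qdiv k (x - y)"
proof -
  assume k: "0<k"
  have "lev k x = lev k y \<longleftrightarrow> vmod (lev k x) (int k) = vmod (lev k y) (int k)" using k by simp
  also have "\<dots> \<longleftrightarrow> vmod (lev k x - lev k y) (int k) = 0" by (rule vmod_eq_iff)
  also have "\<dots> \<longleftrightarrow> lev k (x - y) = 0" using k by simp
  finally show ?thesis using qdiv_iff[OF k, of "x - y"] by simp
qed

lemma qdiv_io_lev: "0<k \<Longrightarrow> qdiv k (io (lev k x) - x)"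
  using lev_eq_iff[of k "io (lev k x)" x] by simp

lemma lev_hs_self[simp]: "0<k \<Longrightarrow> lev k (hs k x) = 0"
  by (simp add: vec_eq_iff)

lemma td1_diff: "td1 c g h - td1 c' g h = td1 (\<lambda>k. c k - c' k) g h"
  by (simp add: td1_def algebra_simps)
lemma td1_add: "td1 c g h + td1 c' g h = td1 (\<lambda>k. c k + c' k) g h"
  by (simp add: td1_def algebra_simps)
lemma hs_td1: "hs k (td1 c g h) = td1 (\<lambda>x. hs k (c x)) g h"
  by (simp add: td1_def)

lemma qdiv_td1: "qdiv k (c g) \<Longrightarrow> qdiv k (c h) \<Longrightarrow> qdiv k (c (g**h)) \<Longrightarrow> qdiv k (td1 c g h)"
  unfolding td1_def by (intro qdiv_add qdiv_diff qdiv_act)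

lemma L1:
  assumes q: "0<q"
    and w: "\<And>x. x \<in> {g, h, g**h} \<Longrightarrow> c x - c' x - (act x a - a) = hs q (w x)"
    and B: "hs q B = td1 c g h" and B': "hs q B' = td1 c' g h"
  shows "B - B' = td1 w g h"
proof (rule hs_inj[OF q])
  have e: "c x = c' x + (act x a - a) + hs q (w x)" if "x \<in> {g, h, g**h}" for x
    using w[OF that] by (simp add: algebra_simps)
  have "hs q (B - B') = td1 c g h - td1 c' g h" using B B' by simp
  also have "\<dots> = act g (c h) - c (g ** h) + c g - (act g (c' h) - c' (g ** h) + c' g)"
    by (simp add: td1_def)
  also have "\<dots> = hs q (td1 w g h)"
    by (simp add: e td1_def algebra_simps)
  finally show "hs q (B - B') = hs q (td1 w g h)" .
qed


lemma sum_hs_const: "finite A \<Longrightarrow> (\<Sum>k\<in>A. x) = hs (card A) x"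
  by (induction A rule: finite_induct) (simp_all add: hs_Suc add.commute)

lemma act_sum: "act g (sum f A) = (\<Sum>k\<in>A. act g (f k))"
  by (induction A rule: infinite_finite_induct) simp_all

lemma smul_cancel: "(k::int) \<noteq> 0 \<Longrightarrow> k *s u = k *s v \<Longrightarrow> u = v"
  by (simp add: vec_eq_iff)

locale fgrp =
  fixes G :: "(int^'d::finite^'d) set"
  assumes finG: "finite G"
    and oneG: "mat 1 \<in> G"
    and multG: "\<forall>g\<in>G. \<forall>h\<in>G. g ** h \<in> G"
    and invG: "\<forall>g\<in>G. \<exists>h\<in>G. g ** h = mat 1"
begin

lemma mult_in: "g \<in> G \<Longrightarrow> h \<in> G \<Longrightarrow> g ** h \<in> G"
  using multG by blast

lemma linv: assumes g: "g \<in> G" shows "\<exists>h\<in>G. h ** g = mat 1 \<and> g ** h = mat 1"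
proof -
  obtain h where h: "h \<in> G" "g ** h = mat 1" using invG g by blast
  obtain k where k: "k \<in> G" "h ** k = mat 1" using invG h(1) by blast
  have "g = g ** (h ** k)" using k by simp
  also have "\<dots> = k" using h by (simp add: matrix_mul_assoc)
  finally have "h ** g = mat 1" using k by simp
  then show ?thesis using h by blast
qed

lemma lcancel: assumes "h \<in> G" "h ** x = h ** y" shows "x = y"
proof -
  obtain h' where "h' ** h = mat 1" using linv assms(1) by blast
  then have "h' ** (h ** x) = h' ** (h ** y)" using assms by simp
  then show ?thesis using \<open>h' ** h = mat 1\<close> by (simp add: matrix_mul_assoc)
qed

lemma reindex: assumes h: "h \<in> G" shows "(\<Sum>k\<in>G. f (h ** k)) = (\<Sum>k\<in>G. (f k :: 'x::comm_monoid_add))"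
proof -
  have inj: "inj_on ((**) h) G" using lcancel h by (auto simp: inj_on_def)
  have img: "(**) h ` G = G"
  proof
    show "(**) h ` G \<subseteq> G" using h mult_in by auto
    show "G \<subseteq> (**) h ` G"
    proof
      fix k assume k: "k \<in> G"
      obtain h' where h': "h' \<in> G" "h ** h' = mat 1" using linv h by blast
      have "k = h ** (h' ** k)" using h' by (simp add: matrix_mul_assoc)
      then show "k \<in> (**) h ` G" using h' k mult_in by blast
    qed
  qed
  have "(\<Sum>k\<in>G. f k) = (\<Sum>k\<in>(**) h ` G. f k)" using img by simp
  also have "\<dots> = (\<Sum>k\<in>G. f (h ** k))" using sum.reindex[OF inj] by simp
  finally show ?thesis by simp
qed

lemma torsion:
  assumes expo: "\<forall>f. cocycle2 G (Mint :: (int^'d, int^'d^'d) gmodule) f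
                   \<longrightarrow> coboundary2 G (Mint :: (int^'d, int^'d^'d) gmodule) (\<lambda>g h. int q *s f g h)"
    and q: "0<q"
    and coc: "\<forall>g\<in>G. \<forall>h\<in>G. \<forall>k\<in>G. act g (E h k) + E g (h**k) = E (g**h) k + E g h"
  shows "\<exists>c. \<forall>g\<in>G. \<forall>h\<in>G. hs q (E g h) = td1 c g h"
proof -
  define m where "m = card G"
  have m: "0 < m" using oneG finG by (auto simp: m_def card_gt_0_iff)
  define C where "C g = (\<Sum>k\<in>G. E g k)" for g
  have avg: "hs m (E g h) = td1 C g h" if g: "g\<in>G" and h: "h\<in>G" for g h
  proof -
    have "(\<Sum>k\<in>G. act g (E h k) + E g (h**k)) = (\<Sum>k\<in>G. E (g**h) k + E g h)"
      using coc g h by (intro sum.cong) auto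
    then have "act g (C h) + C g = C (g**h) + hs m (E g h)"
      by (simp add: sum.distrib C_def act_sum reindex[OF h, of "E g"] sum_hs_const[OF finG] m_def)
    then show ?thesis by (simp add: td1_def algebra_simps)
  qed
  define c0 where "c0 g = lev m (C g)" for g
  have "\<forall>g. \<exists>b. C g = io (c0 g) + hs m b"
  proof
    fix g
    obtain w where "io (c0 g) - C g = hs m w" using qdiv_io_lev[OF m, of "C g"] unfolding qdiv_def c0_def by blast
    then have "C g = io (c0 g) + hs m (- w)" by (simp add: algebra_simps)
    then show "\<exists>b. C g = io (c0 g) + hs m b" by blast
  qed
  then have "\<exists>b. \<forall>g. C g = io (c0 g) + hs m (b g)" by (rule choice)
  then obtain b where b: "\<And>g. C g = io (c0 g) + hs m (b g)" by blast
  define E0 where "E0 g h = g *v c0 h - c0 (g**h) + c0 g" for g h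
  define \<eta>0 where "\<eta>0 g h = (\<chi> i. E0 g h $ i div int m)" for g h
  have ioE0: "io (E0 g h) = td1 (\<lambda>k. io (c0 k)) g h" for g h
    by (simp add: E0_def td1_def)
  have E0div: "int m *s \<eta>0 g h = E0 g h" if g: "g\<in>G" and h: "h\<in>G" for g h
  proof -
    have "td1 (\<lambda>k. io (c0 k)) g h = td1 C g h - td1 (\<lambda>k. hs m (b k)) g h"
      by (simp add: td1_diff b)
    also have "\<dots> = hs m (E g h - td1 b g h)" using avg[OF g h] by (simp add: hs_td1)
    finally have "io (E0 g h) = hs m (E g h - td1 b g h)" by (simp only: ioE0)
    then have "lev m (io (E0 g h)) = 0" by (simp only: lev_hs_self[OF m])
    then have "vmod (E0 g h) (int m) = 0" using m by simp
    then have "\<forall>i. int m dvd E0 g h $ i" by (simp add: vec_eq_iff dvd_eq_mod_eq_0)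
    then show ?thesis by (simp add: \<eta>0_def vec_eq_iff)
  qed
  have coc0: "g *v \<eta>0 h k + \<eta>0 g (h ** k) = \<eta>0 (g ** h) k + \<eta>0 g h"
    if g: "g\<in>G" and h: "h\<in>G" and k: "k\<in>G" for g h k
  proof -
    have "int m *s (g *v \<eta>0 h k + \<eta>0 g (h ** k)) = g *v (int m *s \<eta>0 h k) + int m *s \<eta>0 g (h ** k)"
      by (simp only: vector_add_ldistrib mv_smul)
    also have "\<dots> = g *v E0 h k + E0 g (h ** k)" using g h k mult_in by (simp add: E0div)
    also have "\<dots> = E0 (g ** h) k + E0 g h"
      by (simp add: E0_def algebra_simps matrix_vector_mul_assoc matrix_mul_assoc)
    also have "\<dots> = int m *s (\<eta>0 (g ** h) k + \<eta>0 g h)"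
      using g h k mult_in by (simp add: E0div vector_add_ldistrib)
    finally have e: "int m *s (g *v \<eta>0 h k + \<eta>0 g (h ** k)) = int m *s (\<eta>0 (g ** h) k + \<eta>0 g h)" .
    have "int m \<noteq> 0" using m by simp
    from smul_cancel[OF this e] show ?thesis .
  qed
  have "cocycle2 G (Mint :: (int^'d, int^'d^'d) gmodule) \<eta>0"
    unfolding cocycle2_def by (simp add: Mint_def coc0)
  then obtain c1 where c1: "\<forall>g\<in>G. \<forall>h\<in>G. int q *s \<eta>0 g h = d1 (Mint :: (int^'d, int^'d^'d) gmodule) c1 g h"
    using expo unfolding coboundary2_def by blast
  have eta: "E g h = io (\<eta>0 g h) + td1 b g h" if g: "g\<in>G" and h: "h\<in>G" for g h
  proof (rule hs_inj[OF m])
    have "hs m (io (\<eta>0 g h)) = io (int m *s \<eta>0 g h)" by simp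
    also have "\<dots> = io (E0 g h)" using E0div[OF g h] by simp
    finally have "hs m (io (\<eta>0 g h)) = io (E0 g h)" .
    then have "hs m (io (\<eta>0 g h) + td1 b g h) = td1 (\<lambda>k. io (c0 k)) g h + td1 (\<lambda>k. hs m (b k)) g h"
      by (simp add: ioE0 hs_td1)
    also have "\<dots> = td1 (\<lambda>k. io (c0 k) + hs m (b k)) g h" by (simp add: td1_add)
    also have "\<dots> = td1 C g h" using b by (simp add: td1_def)
    finally show "hs m (E g h) = hs m (io (\<eta>0 g h) + td1 b g h)" using avg[OF g h] by simp
  qed
  show ?thesis
  proof (intro exI[of _ "\<lambda>k. io (c1 k) + hs q (b k)"] ballI)
    fix g h assume g: "g\<in>G" and h: "h\<in>G"
    have "hs q (io (\<eta>0 g h)) = io (int q *s \<eta>0 g h)" by simp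
    also have "\<dots> = td1 (\<lambda>k. io (c1 k)) g h"
      using c1 g h by (simp add: d1_def msub_def Mint_def td1_def)
    finally have "hs q (E g h) = td1 (\<lambda>k. io (c1 k)) g h + td1 (\<lambda>k. hs q (b k)) g h"
      by (simp add: eta[OF g h] hs_td1)
    then show "hs q (E g h) = td1 (\<lambda>k. io (c1 k) + hs q (b k)) g h" by (simp add: td1_add)
  qed
qed

end


definition msm :: "int \<Rightarrow> int^'d^'d \<Rightarrow> int^'d^'d" where
  "msm k M = (\<chi> i j. k * M$i$j)"

lemma msm_nth[simp]: "msm k M $ i $ j = k * M$i$j" by (simp add: msm_def)
lemma msm_add: "msm k (X + Y) = msm k X + msm k Y" by (simp add: vec_eq_iff algebra_simps)
lemma msm_addk: "msm (a + b) X = msm a X + msm b X" by (simp add: vec_eq_iff algebra_simps)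
lemma msm_msm: "msm a (msm b X) = msm (a*b) X" by (simp add: vec_eq_iff algebra_simps)
lemma msm_mm_l: "msm k X ** Y = msm k (X ** Y)"
  by (simp add: vec_eq_iff matrix_matrix_mult_def sum_distrib_left algebra_simps)
lemma msm_mm_r: "X ** msm k Y = msm k (X ** Y)"
  by (simp add: vec_eq_iff matrix_matrix_mult_def sum_distrib_left algebra_simps)
lemma msm_0[simp]: "msm 0 X = 0" by (simp add: vec_eq_iff)
lemma matrix_add_rdistrib: "((A::int^'n^'m) + B) ** C = A ** C + B ** C"
  by (simp add: vec_eq_iff matrix_matrix_mult_def sum.distrib algebra_simps)

primrec mpow :: "int^'d^'d \<Rightarrow> nat \<Rightarrow> int^'d^'d" where
  "mpow A 0 = mat 1"
| "mpow A (Suc n) = mpow A n ** A"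

lemma mpow_add: "mpow A (a + b) = mpow A a ** mpow A b"
  by (induction b) (simp_all add: matrix_mul_assoc)
lemma mpow_mult: "mpow A (a * b) = mpow (mpow A a) b"
proof (induction b)
  case (Suc b)
  have "mpow A (a * Suc b) = mpow A (a*b + a)" by (simp add: add.commute)
  also have "\<dots> = mpow A (a*b) ** mpow A a" by (rule mpow_add)
  finally show ?case using Suc by simp
qed simp
lemma mpow_1[simp]: "mpow A 1 = A" by simp

definition mcong :: "int \<Rightarrow> int^'d^'d \<Rightarrow> int^'d^'d \<Rightarrow> bool" where
  "mcong N A B \<longleftrightarrow> (\<exists>C. A = B + msm N C)"

lemma mcong_iff: "mcong N A B \<longleftrightarrow> (\<forall>i j. N dvd A$i$j - B$i$j)"
proof
  assume "mcong N A B" then show "\<forall>i j. N dvd A$i$j - B$i$j" by (auto simp: mcong_def)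
next
  assume h: "\<forall>i j. N dvd A$i$j - B$i$j"
  define C where "C = (\<chi> i j. (A$i$j - B$i$j) div N)"
  have "A = B + msm N C" using h by (simp add: vec_eq_iff C_def)
  then show "mcong N A B" by (auto simp: mcong_def)
qed

lemma mcong_mult: assumes "mcong N A (mat 1)" "mcong N B (mat 1)" shows "mcong N (A ** B) (mat 1)"
proof -
  obtain C D where "A = mat 1 + msm N C" "B = mat 1 + msm N D" using assms by (auto simp: mcong_def)
  then have "A ** B = mat 1 + msm N (C + D + msm N (C ** D))"
    by (simp add: matrix_add_ldistrib matrix_add_rdistrib msm_mm_l msm_mm_r msm_add msm_msm algebra_simps)
  then show ?thesis by (auto simp: mcong_def)
qed

lemma mcong_mpow: "mcong N A (mat 1) \<Longrightarrow> mcong N (mpow A n) (mat 1)"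
proof (induction n)
  case 0 have "mat 1 = mat 1 + msm N 0" by (simp add: vec_eq_iff)
  then show ?case unfolding mcong_def by auto
next
  case (Suc n) then show ?case by (simp add: mcong_mult)
qed


lemma Suc_choose_2: "Suc n choose 2 = (n choose 2) + n"
  by (simp add: numeral_2_eq_2)

lemma expand:
  "\<exists>Y. mpow (mat 1 + msm P C) n = mat 1 + msm (int n * P) C + msm (int (n choose 2) * P^2) (C ** C) + msm (P^3) Y"
proof (induction n)
  case 0 show ?case by (intro exI[of _ 0]) (simp add: vec_eq_iff)
next
  case (Suc n)
  then obtain Y where Y: "mpow (mat 1 + msm P C) n = mat 1 + msm (int n * P) C + msm (int (n choose 2) * P^2) (C ** C) + msm (P^3) Y"
    by blast
  let ?Y = "msm (int (n choose 2)) (C ** C ** C) + Y + msm P (Y ** C)"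
  have "mpow (mat 1 + msm P C) (Suc n) = mat 1 + msm (int (Suc n) * P) C + msm (int (Suc n choose 2) * P^2) (C ** C) + msm (P^3) ?Y"
    by (simp add: Y Suc_choose_2 matrix_add_ldistrib matrix_add_rdistrib msm_mm_l msm_mm_r msm_add msm_msm
        msm_addk[symmetric] algebra_simps power2_eq_square power3_eq_cube matrix_mul_assoc)
  then show ?case by blast
qed


lemma exists_p: assumes "(q::nat) \<ge> 3" shows "\<exists>p k. prime p \<and> p^k dvd q \<and> k \<ge> 1 \<and> (p = 2 \<longrightarrow> k \<ge> 2)"
proof (cases "4 dvd q")
  case True
  then show ?thesis by (intro exI[of _ 2] exI[of _ 2]) simp
next
  case False
  obtain q' where q': "odd q'" "q' dvd q" "q' \<noteq> 1"
  proof (cases "even q")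
    case True
    then obtain r where r: "q = 2 * r" by blast
    have "odd r"
    proof
      assume "even r"
      then obtain s where "r = 2 * s" by blast
      then have "q = 4 * s" using r by simp
      then show False using False by simp
    qed
    moreover have "r \<noteq> 1" using r assms by auto
    ultimately show ?thesis using r by (intro that[of r]) auto
  next
    case False
    moreover have "q \<noteq> 1" using assms by simp
    ultimately show ?thesis by (intro that[of q]) auto
  qed
  obtain p where p: "prime p" "p dvd q'" using prime_factor_nat[OF q'(3)] by blast
  have "p \<noteq> 2" using p q'(1) by auto
  moreover have "p^1 dvd q" using p q' dvd_trans by auto
  ultimately show ?thesis using p by blast
qed

lemma prime_case:
  fixes A :: "int^'d^'d"
  assumes q3: "q \<ge> 3" and cong: "\<forall>i j. int q dvd (A$i$j - mat 1$i$j)"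
    and l: "prime (l::nat)" and pw: "mpow A l = mat 1"
  shows "A = mat 1"
proof (rule ccontr)
  assume ne: "A \<noteq> mat 1"
  obtain p k0 where p: "prime p" "p^k0 dvd q" "k0 \<ge> 1" "p = 2 \<longrightarrow> k0 \<ge> 2"
    using exists_p[OF q3] by blast
  define B where "B = A - mat 1"
  obtain i0 j0 where b0: "B$i0$j0 \<noteq> 0" using ne unfolding B_def by (auto simp: vec_eq_iff)
  define S where "S = {t. \<forall>i j. int p^t dvd B$i$j}"
  have p2: "p \<ge> 2" using p(1) prime_ge_2_nat by blast
  have k0S: "k0 \<in> S" unfolding S_def B_def
  proof (intro CollectI allI)
    fix i j
    have "int (p^k0) dvd int q" using p(2) by (simp only: of_nat_dvd_iff)
    then show "int p ^ k0 dvd (A - mat 1) $ i $ j" using cong by (auto intro: dvd_trans)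
  qed
  have Sb: "S \<subseteq> {..nat \<bar>B$i0$j0\<bar>}"
  proof
    fix t assume "t \<in> S"
    then have "int p^t dvd B$i0$j0" by (simp add: S_def)
    then have "\<bar>int p ^ t\<bar> \<le> \<bar>B$i0$j0\<bar>" using b0 by (intro dvd_imp_le_int)
    then have "int p ^ t \<le> \<bar>B$i0$j0\<bar>" by simp
    moreover have "int t < int p ^ t"
    proof -
      have "t < 2^t" by (rule less_exp)
      also have "(2::nat)^t \<le> p^t" using p2 by (rule power_mono) simp
      finally show ?thesis by (metis of_nat_less_iff of_nat_power)
    qed
    ultimately have "int t \<le> \<bar>B$i0$j0\<bar>" by linarith
    then show "t \<in> {..nat \<bar>B$i0$j0\<bar>}" by simp
  qed
  have finS: "finite S" using Sb finite_subset by blast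
  define t where "t = Max S"
  have tS: "t \<in> S" using finS k0S unfolding t_def by (intro Max_in) auto
  have kt: "k0 \<le> t" using finS k0S unfolding t_def by simp
  have t1: "Suc t \<notin> S"
  proof
    assume "Suc t \<in> S"
    then have "Suc t \<le> t" using finS unfolding t_def by simp
    then show False by simp
  qed
  define P where "P = int p ^ t"
  have P0: "P \<noteq> 0" using p2 by (simp add: P_def)
  define C where "C = (\<chi> i j. B$i$j div P)"
  have BC: "B = msm P C" using tS by (simp add: S_def C_def vec_eq_iff P_def)
  obtain i j where nc: "\<not> int p dvd C$i$j"
  proof -
    from t1 obtain i j where "\<not> int p^Suc t dvd B$i$j" by (auto simp: S_def)
    then have "\<not> int p dvd C$i$j" using BC by (auto simp: P_def vec_eq_iff mult.commute)
    then show ?thesis using that by blast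
  qed
  have A: "A = mat 1 + msm P C" using BC unfolding B_def by (metis add.commute diff_add_cancel)
  obtain Y where "mpow (mat 1 + msm P C) l = mat 1 + msm (int l * P) C + msm (int (l choose 2) * P^2) (C ** C) + msm (P^3) Y"
    using expand by blast
  then have "msm (int l * P) C + msm (int (l choose 2) * P^2) (C ** C) + msm (P^3) Y = 0"
    using pw A by (simp add: add.assoc)
  then have "(msm (int l * P) C + msm (int (l choose 2) * P^2) (C ** C) + msm (P^3) Y)$i$j = 0" by simp
  then have "P * (int l * C$i$j + int (l choose 2) * P * (C**C)$i$j + P^2 * Y$i$j) = 0"
    by (simp add: algebra_simps power2_eq_square power3_eq_cube)
  then have eq: "int l * C$i$j + int (l choose 2) * P * (C**C)$i$j + P^2 * Y$i$j = 0" using P0 by simp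
  define c where "c = C$i$j"
  define d where "d = (C**C)$i$j"
  define y where "y = Y$i$j"
  have eq: "int l * c + int (l choose 2) * P * d + P^2 * y = 0" using eq by (simp add: c_def d_def y_def)
  have t0: "t \<ge> 1" using kt p(3) by simp
  have pP: "int p dvd P" using t0 by (simp add: P_def)
  have pc: "\<not> int p dvd c" using nc by (simp add: c_def)
  show False
  proof (cases "l = p")
    case False
    have "int p dvd int l * c"
    proof -
      have "int l * c = - (P * (int (l choose 2) * d + P * y))" using eq by (simp add: algebra_simps power2_eq_square)
      then show ?thesis using pP by simp
    qed
    then have "int p dvd int l \<or> int p dvd c" using p(1) prime_dvd_multD by (metis prime_nat_int_transfer)
    then show False
    proof
      assume "int p dvd int l"
      then have "p dvd l" by simp
      then have "p = l" using p(1) l primes_dvd_imp_eq by blast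
      then show False using False by simp
    qed (use pc in simp)
  next
    case True
    show False
    proof (cases "p = 2")
      case True
      then have t2: "t \<ge> 2" using kt p(4) by simp
      have lc: "l choose 2 = 1" using True \<open>l = p\<close> by simp
      obtain u where u: "t = 2 + u" using t2 le_Suc_ex by blast
      have "P = 4 * 2^u" using True by (simp add: P_def u power_add)
      then obtain r where r: "P = 4 * r" by blast
      have "2 * c = - (4 * (r * d + 4 * r * r * y))" using eq \<open>l = p\<close> True lc r
        by (simp add: algebra_simps power2_eq_square)
      then have "2 * c = 2 * (- (2 * (r * d + 4 * r * r * y)))" by simp
      then have "c = - (2 * (r * d + 4 * r * r * y))" by simp
      then show False using pc True by simp
    next
      case False
      have op: "odd p" using p(1) False p2 by (intro prime_odd_nat) auto
      have "even (p - 1)" using op p2 by simp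
      then obtain e where e: "p - 1 = 2 * e" by blast
      have lc: "int (l choose 2) = int p * int e"
        using \<open>l = p\<close> e p2 by (simp add: choose_two algebra_simps)
      obtain s where s: "P = int p * s" using pP by blast
      have "int p * c = - (int p * (int e * P * d + int p * s * s * y))"
        using eq \<open>l = p\<close> lc s by (simp add: algebra_simps power2_eq_square)
      then have "int p * c = int p * (- (int e * P * d + int p * s * s * y))" by (simp add: algebra_simps)
      then have "c = - (int e * P * d + int p * s * s * y)" using p2 by (subst (asm) mult_cancel_left) simp
      then have "int p dvd c" using pP by simp
      then show False using pc by simp
    qed
  qed
qed


lemma minkowski:
  fixes A :: "int^'d^'d"
  assumes q3: "q \<ge> 3" and cong: "\<forall>i j. int q dvd (A$i$j - mat 1$i$j)"
    and pw: "mpow A r = mat 1" and r: "0 < r"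
  shows "A = mat 1"
  using pw r
proof (induction r rule: less_induct)
  case (less r)
  show ?case
  proof (cases "r = 1")
    case True then show ?thesis using less.prems by simp
  next
    case False
    obtain l where l: "prime l" "l dvd r" using prime_factor_nat[OF False] by blast
    then obtain r' where r': "r = l * r'" by blast
    have l2: "l \<ge> 2" using l(1) prime_ge_2_nat by blast
    have r'0: "0 < r'" using r' less.prems(2) by (cases r') auto
    have r'r: "r' < r" using r' l2 r'0 by simp
    have mc: "mcong (int q) A (mat 1)" using cong by (simp add: mcong_iff)
    have "mcong (int q) (mpow A r') (mat 1)" by (rule mcong_mpow[OF mc])
    then have c': "\<forall>i j. int q dvd (mpow A r'$i$j - mat 1$i$j)" by (simp add: mcong_iff)
    have "mpow (mpow A r') l = mpow A (r' * l)" by (simp add: mpow_mult)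
    also have "\<dots> = mat 1" using less.prems(1) r' by (simp add: mult.commute)
    finally have "mpow A r' = mat 1" using prime_case[OF q3 c' l(1)] by blast
    then show ?thesis using less.IH[OF r'r _ r'0] by blast
  qed
qed


lemma Mhat_simps[simp]: "mcar Mhat = Mhat_car" "madd Mhat = hadd" "mneg Mhat = hneg" "mact Mhat = hact"
  by (simp_all add: Mhat_def)
lemma Mq_simps[simp]: "mcar (Mq q) = {v. vmod v (int q) = v}" "madd (Mq q) = (\<lambda>v w. vmod (v + w) (int q))"
  "mneg (Mq q) = (\<lambda>v. vmod (- v) (int q))" "mact (Mq q) = (\<lambda>g v. vmod (g *v v) (int q))"
  by (simp_all add: Mq_def)

lemma Rep_in[simp]: "Rep_mh x \<in> Mhat_car" using Rep_mh by blast
lemma Abs_inv[simp]: "x \<in> Mhat_car \<Longrightarrow> Rep_mh (Abs_mh x) = x" by (simp add: Abs_mh_inverse)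
lemma Abs_inj: "x \<in> Mhat_car \<Longrightarrow> y \<in> Mhat_car \<Longrightarrow> Abs_mh x = Abs_mh y \<longleftrightarrow> x = y"
  by (simp add: Abs_mh_inject)
lemma Abs_hadd: "x \<in> Mhat_car \<Longrightarrow> y \<in> Mhat_car \<Longrightarrow> Abs_mh (hadd x y) = Abs_mh x + Abs_mh y"
  by (simp add: plus_mh.abs_eq eq_onp_same_args)
lemma Abs_hneg: "x \<in> Mhat_car \<Longrightarrow> Abs_mh (hneg x) = - Abs_mh x"
  by (simp add: uminus_mh.abs_eq eq_onp_same_args)
lemma Abs_hact: "x \<in> Mhat_car \<Longrightarrow> Abs_mh (hact g x) = act g (Abs_mh x)"
  by (simp add: act.abs_eq eq_onp_same_args)
lemma Abs_hscal: "x \<in> Mhat_car \<Longrightarrow> Abs_mh (hscal k x) = hs k (Abs_mh x)"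
  by (simp add: hs.abs_eq eq_onp_same_args)
lemma Abs_hiota: "Abs_mh (hiota v) = io v"
  by (simp add: io.abs_eq eq_onp_same_args hiota_in)
lemma Rep_hiota: "hiota v = Rep_mh (io v)"
  by (simp add: io.rep_eq)
lemma Abs_msub: "x \<in> Mhat_car \<Longrightarrow> y \<in> Mhat_car \<Longrightarrow> Abs_mh (msub Mhat x y) = Abs_mh x - Abs_mh y"
  by (simp add: msub_def Abs_hadd Abs_hneg hneg_in)
lemma msub_in: "x \<in> Mhat_car \<Longrightarrow> y \<in> Mhat_car \<Longrightarrow> msub Mhat x y \<in> Mhat_car"
  by (simp add: msub_def hadd_in hneg_in)
lemma Abs_Rep_lev: "x \<in> Mhat_car \<Longrightarrow> x n = lev n (Abs_mh x)"
  by (simp add: lev.rep_eq)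
lemma Rep_lev: "Rep_mh x n = lev n x"
  by (simp add: lev.rep_eq)
lemma Abs_0: "Abs_mh (\<lambda>n. 0) = 0"
  by (simp add: zero_mh.abs_eq)

lemma d1_in: "\<forall>k. c k \<in> Mhat_car \<or> True \<Longrightarrow> c h \<in> Mhat_car \<Longrightarrow> c (g**h) \<in> Mhat_car \<Longrightarrow> c g \<in> Mhat_car
   \<Longrightarrow> d1 Mhat c g h \<in> Mhat_car"
  by (simp add: d1_def msub_in hadd_in hact_in)
lemma Abs_d1: "c h \<in> Mhat_car \<Longrightarrow> c (g**h) \<in> Mhat_car \<Longrightarrow> c g \<in> Mhat_car
   \<Longrightarrow> Abs_mh (d1 Mhat c g h) = td1 (\<lambda>k. Abs_mh (c k)) g h"
  by (simp add: d1_def td1_def Abs_hadd Abs_msub msub_in hact_in Abs_hact)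

lemma hdiv_eq: "0<q \<Longrightarrow> hdiv q (Rep_mh (hs q b)) = Rep_mh b"
  unfolding hdiv_def
proof (rule the_equality)
  assume q: "0<q"
  show "Rep_mh b \<in> Mhat_car \<and> hscal q (Rep_mh b) = Rep_mh (hs q b)" by (simp add: hs.rep_eq)
  fix x assume x: "x \<in> Mhat_car \<and> hscal q x = Rep_mh (hs q b)"
  then have "hs q (Abs_mh x) = hs q b"
    by (metis Abs_hscal Rep_mh_inverse)
  then have "Abs_mh x = b" by (rule hs_inj[OF q])
  then show "x = Rep_mh b" using x by auto
qed

lemma qdiv_minus_iff: "qdiv k (- x) \<longleftrightarrow> qdiv k x"
  using qdiv_minus[of k x] qdiv_minus[of k "-x"] by auto

locale setting = fgrp G for G :: "(int^'d::finite^'d) set" +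
  fixes q :: nat
  assumes q3: "q \<ge> 3"
    and expo: "\<forall>f. cocycle2 G (Mint :: (int^'d, int^'d^'d) gmodule) f
                   \<longrightarrow> coboundary2 G (Mint :: (int^'d, int^'d^'d) gmodule) (\<lambda>g h. int q *s f g h)"
begin

lemma q0: "0 < q" using q3 by simp

lemma coc1_hat: "cocycle1 G Mhat f \<longleftrightarrow> (\<forall>g\<in>G. f g \<in> Mhat_car) \<and>
   (\<forall>g\<in>G. \<forall>h\<in>G. Abs_mh (f (g**h)) = Abs_mh (f g) + act g (Abs_mh (f h)))"
proof -
  have "f (g**h) = hadd (f g) (hact g (f h)) \<longleftrightarrow> Abs_mh (f (g**h)) = Abs_mh (f g) + act g (Abs_mh (f h))"
    if "\<forall>g\<in>G. f g \<in> Mhat_car" "g\<in>G" "h\<in>G" for g h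
    using that mult_in by (simp add: Abs_hadd[symmetric] Abs_hact[symmetric] hact_in hadd_in Abs_inj)
  then show ?thesis unfolding cocycle1_def by auto
qed

lemma coh1_hat: assumes "\<forall>g\<in>G. f g \<in> Mhat_car" "\<forall>g\<in>G. f' g \<in> Mhat_car"
  shows "cohomologous1 G Mhat f f' \<longleftrightarrow> (\<exists>a. \<forall>g\<in>G. Abs_mh (f g) - Abs_mh (f' g) = act g a - a)"
proof
  assume "cohomologous1 G Mhat f f'"
  then obtain a where a: "a \<in> Mhat_car" "\<forall>g\<in>G. msub Mhat (f g) (f' g) = msub Mhat (hact g a) a"
    unfolding cohomologous1_def coboundary1_def by auto
  have "Abs_mh (f g) - Abs_mh (f' g) = act g (Abs_mh a) - Abs_mh a" if g: "g\<in>G" for g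
  proof -
    have "Abs_mh (msub Mhat (f g) (f' g)) = Abs_mh (msub Mhat (hact g a) a)" using a g by simp
    then show ?thesis using a(1) g assms by (simp add: Abs_msub hact_in Abs_hact)
  qed
  then show "\<exists>a. \<forall>g\<in>G. Abs_mh (f g) - Abs_mh (f' g) = act g a - a" by blast
next
  assume "\<exists>a. \<forall>g\<in>G. Abs_mh (f g) - Abs_mh (f' g) = act g a - a"
  then obtain a where a: "\<forall>g\<in>G. Abs_mh (f g) - Abs_mh (f' g) = act g a - a" by blast
  have "msub Mhat (f g) (f' g) = msub Mhat (hact g (Rep_mh a)) (Rep_mh a)" if g: "g\<in>G" for g
  proof -
    have "Abs_mh (msub Mhat (f g) (f' g)) = Abs_mh (msub Mhat (hact g (Rep_mh a)) (Rep_mh a))"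
      using a g assms by (simp add: Abs_msub hact_in Abs_hact Rep_mh_inverse)
    then show ?thesis using g assms by (simp add: Abs_inj msub_in hact_in)
  qed
  then show "cohomologous1 G Mhat f f'"
    unfolding cohomologous1_def coboundary1_def by (intro bexI[of _ "Rep_mh a"]) auto
qed

lemma coc2_hat: "cocycle2 G Mhat \<eta> \<longleftrightarrow> (\<forall>g\<in>G. \<forall>h\<in>G. \<eta> g h \<in> Mhat_car) \<and>
   (\<forall>g\<in>G. \<forall>h\<in>G. \<forall>k\<in>G. act g (Abs_mh (\<eta> h k)) + Abs_mh (\<eta> g (h**k)) = Abs_mh (\<eta> (g**h) k) + Abs_mh (\<eta> g h))"
proof -
  have "hadd (hact g (\<eta> h k)) (\<eta> g (h ** k)) = hadd (\<eta> (g ** h) k) (\<eta> g h) \<longleftrightarrow>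
     act g (Abs_mh (\<eta> h k)) + Abs_mh (\<eta> g (h**k)) = Abs_mh (\<eta> (g**h) k) + Abs_mh (\<eta> g h)"
    if "\<forall>g\<in>G. \<forall>h\<in>G. \<eta> g h \<in> Mhat_car" "g\<in>G" "h\<in>G" "k\<in>G" for g h k
    using that mult_in by (simp add: Abs_hadd[symmetric] Abs_hact[symmetric] hact_in hadd_in Abs_inj)
  then show ?thesis unfolding cocycle2_def by auto
qed

lemma cob2_hat: assumes "\<forall>g\<in>G. \<forall>h\<in>G. \<eta> g h \<in> Mhat_car"
  shows "coboundary2 G Mhat \<eta> \<longleftrightarrow> (\<exists>c. \<forall>g\<in>G. \<forall>h\<in>G. Abs_mh (\<eta> g h) = td1 c g h)"
proof
  assume "coboundary2 G Mhat \<eta>"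
  then obtain c where c: "\<forall>g\<in>G. c g \<in> Mhat_car" "\<forall>g\<in>G. \<forall>h\<in>G. \<eta> g h = d1 Mhat c g h"
    unfolding coboundary2_def by auto
  have "Abs_mh (\<eta> g h) = td1 (\<lambda>k. Abs_mh (c k)) g h" if "g\<in>G" "h\<in>G" for g h
    using c that mult_in by (simp add: Abs_d1)
  then show "\<exists>c. \<forall>g\<in>G. \<forall>h\<in>G. Abs_mh (\<eta> g h) = td1 c g h" by blast
next
  assume "\<exists>c. \<forall>g\<in>G. \<forall>h\<in>G. Abs_mh (\<eta> g h) = td1 c g h"
  then obtain c where c: "\<forall>g\<in>G. \<forall>h\<in>G. Abs_mh (\<eta> g h) = td1 c g h" by blast
  have "\<eta> g h = d1 Mhat (\<lambda>k. Rep_mh (c k)) g h" if "g\<in>G" "h\<in>G" for g h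
  proof -
    have "Abs_mh (\<eta> g h) = Abs_mh (d1 Mhat (\<lambda>k. Rep_mh (c k)) g h)"
      using c that by (simp add: Abs_d1 Rep_mh_inverse)
    then show ?thesis using assms that by (simp add: Abs_inj d1_in)
  qed
  then show "coboundary2 G Mhat \<eta>" unfolding coboundary2_def
    by (intro exI[of _ "\<lambda>k. Rep_mh (c k)"]) auto
qed

lemma coh2_hat: assumes "\<forall>g\<in>G. \<forall>h\<in>G. \<eta> g h \<in> Mhat_car" "\<forall>g\<in>G. \<forall>h\<in>G. \<eta>' g h \<in> Mhat_car"
  shows "cohomologous2 G Mhat \<eta> \<eta>' \<longleftrightarrow> (\<exists>c. \<forall>g\<in>G. \<forall>h\<in>G. Abs_mh (\<eta> g h) - Abs_mh (\<eta>' g h) = td1 c g h)"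
proof -
  have "\<forall>g\<in>G. \<forall>h\<in>G. msub Mhat (\<eta> g h) (\<eta>' g h) \<in> Mhat_car" using assms by (simp add: msub_in)
  from cob2_hat[OF this] show ?thesis unfolding cohomologous2_def using assms by (simp add: Abs_msub)
qed


lemma vmod_qdiv: "vmod u (int q) = vmod v (int q) \<longleftrightarrow> qdiv q (io u - io v)"
  using lev_eq_iff[OF q0, of "io u" "io v"] q0 by simp

lemma msub_q: "msub (Mq q) u v = vmod (u - v) (int q)"
  by (simp add: msub_def)

lemma coc1_q: "cocycle1 G (Mq q) z \<longleftrightarrow> (\<forall>g\<in>G. vmod (z g) (int q) = z g) \<and>
   (\<forall>g\<in>G. \<forall>h\<in>G. qdiv q (td1 (\<lambda>k. io (z k)) g h))"
proof -
  have "z (g**h) = vmod (z g + vmod (g *v z h) (int q)) (int q) \<longleftrightarrow> qdiv q (td1 (\<lambda>k. io (z k)) g h)"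
    if r: "\<forall>g\<in>G. vmod (z g) (int q) = z g" and g: "g\<in>G" and h: "h\<in>G" for g h
  proof -
    have "z (g**h) = vmod (z g + vmod (g *v z h) (int q)) (int q) \<longleftrightarrow>
       vmod (z (g**h)) (int q) = vmod (z g + g *v z h) (int q)" using r g h mult_in by auto
    also have "\<dots> \<longleftrightarrow> qdiv q (io (z (g**h)) - io (z g + g *v z h))" by (rule vmod_qdiv)
    also have "io (z (g**h)) - io (z g + g *v z h) = - td1 (\<lambda>k. io (z k)) g h"
      by (simp add: td1_def algebra_simps)
    finally show ?thesis by (simp add: qdiv_minus_iff)
  qed
  then show ?thesis unfolding cocycle1_def by auto
qed

lemma coh1_q: assumes "\<forall>g\<in>G. vmod (z g) (int q) = z g" "\<forall>g\<in>G. vmod (z' g) (int q) = z' g"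
  shows "cohomologous1 G (Mq q) z z' \<longleftrightarrow> (\<exists>a. \<forall>g\<in>G. qdiv q (io (z g) - io (z' g) - (act g a - a)))"
proof
  assume "cohomologous1 G (Mq q) z z'"
  then obtain a where a: "\<forall>g\<in>G. msub (Mq q) (z g) (z' g) = msub (Mq q) (vmod (g *v a) (int q)) a"
    unfolding cohomologous1_def coboundary1_def by auto
  have "qdiv q (io (z g) - io (z' g) - (act g (io a) - io a))" if g: "g\<in>G" for g
  proof -
    have "vmod (z g - z' g) (int q) = vmod (g *v a - a) (int q)" using a g by (simp add: msub_q)
    then have "qdiv q (io (z g - z' g) - io (g *v a - a))" by (simp only: vmod_qdiv)
    then show ?thesis by (simp add: algebra_simps)
  qed
  then show "\<exists>a. \<forall>g\<in>G. qdiv q (io (z g) - io (z' g) - (act g a - a))" by blast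
next
  assume "\<exists>a. \<forall>g\<in>G. qdiv q (io (z g) - io (z' g) - (act g a - a))"
  then obtain a where a: "\<forall>g\<in>G. qdiv q (io (z g) - io (z' g) - (act g a - a))" by blast
  define a0 where "a0 = lev q a"
  have a0: "vmod a0 (int q) = a0" using q0 by (simp add: a0_def)
  have d: "qdiv q (io a0 - a)" unfolding a0_def by (rule qdiv_io_lev[OF q0])
  have "msub (Mq q) (z g) (z' g) = msub (Mq q) (vmod (g *v a0) (int q)) a0" if g: "g\<in>G" for g
  proof -
    have "io (z g - z' g) - io (g *v a0 - a0) =
      (io (z g) - io (z' g) - (act g a - a)) - (act g (io a0 - a) - (io a0 - a))"
      by (simp add: algebra_simps)
    moreover have "qdiv q \<dots>" using a g by (intro qdiv_diff[OF _ qdiv_diff[OF qdiv_act[OF d] d]]) auto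
    ultimately have "qdiv q (io (z g - z' g) - io (g *v a0 - a0))" by simp
    then have "vmod (z g - z' g) (int q) = vmod (g *v a0 - a0) (int q)" by (simp only: vmod_qdiv)
    then show ?thesis by (simp add: msub_q)
  qed
  then show "cohomologous1 G (Mq q) z z'"
    unfolding cohomologous1_def coboundary1_def using a0 by (intro bexI[of _ a0]) auto
qed

lemma coh1_q_refl: assumes "\<forall>g\<in>G. vmod (z g) (int q) = z g" "\<forall>g\<in>G. z' g = z g"
  shows "cohomologous1 G (Mq q) z z'"
  using assms by (subst coh1_q) (auto intro!: exI[of _ 0] qdiv_zero)

definition Bz :: "(int^'d^'d \<Rightarrow> int^'d) \<Rightarrow> int^'d^'d \<Rightarrow> int^'d^'d \<Rightarrow> 'd mh" where
  "Bz z g h = (SOME b. hs q b = td1 (\<lambda>k. io (z k)) g h)"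

lemma Bz: assumes "qdiv q (td1 (\<lambda>k. io (z k)) g h)"
  shows "hs q (Bz z g h) = td1 (\<lambda>k. io (z k)) g h" "beta q z g h = Rep_mh (Bz z g h)"
proof -
  show b: "hs q (Bz z g h) = td1 (\<lambda>k. io (z k)) g h"
    unfolding Bz_def by (rule someI_ex) (use assms in \<open>auto simp: qdiv_def\<close>)
  have e: "Abs_mh (d1 Mhat (\<lambda>k. hiota (z k)) g h) = td1 (\<lambda>k. io (z k)) g h"
    by (simp add: Abs_d1 hiota_in Abs_hiota)
  have "d1 Mhat (\<lambda>k. hiota (z k)) g h \<in> Mhat_car" by (simp add: d1_in hiota_in)
  then have "d1 Mhat (\<lambda>k. hiota (z k)) g h = Rep_mh (td1 (\<lambda>k. io (z k)) g h)"
    using e by (metis Abs_inv)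
  then show "beta q z g h = Rep_mh (Bz z g h)"
    unfolding beta_def by (simp add: b[symmetric] hdiv_eq q0)
qed


lemma qdiv_td1_cong: assumes "\<And>k. k \<in> {g, h, g**h} \<Longrightarrow> qdiv q (c k - c' k)" "qdiv q (td1 c' g h)"
  shows "qdiv q (td1 c g h)"
proof -
  have "td1 c g h = td1 c' g h + td1 (\<lambda>k. c k - c' k) g h" by (simp add: td1_def algebra_simps)
  moreover have "qdiv q (td1 (\<lambda>k. c k - c' k) g h)" using assms(1) by (intro qdiv_td1) auto
  ultimately show ?thesis using assms(2) by (simp add: qdiv_add)
qed

lemma w_choice: "\<forall>g\<in>G. qdiv q (X g) \<Longrightarrow> \<exists>w. \<forall>g\<in>G. X g = hs q (w g)"
  unfolding qdiv_def by (rule bchoice) auto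

lemma L1G: assumes w: "\<forall>g\<in>G. c g - c' g - (act g a - a) = hs q (w g)"
    and B: "\<forall>g\<in>G. \<forall>h\<in>G. hs q (B g h) = td1 c g h" and B': "\<forall>g\<in>G. \<forall>h\<in>G. hs q (B' g h) = td1 c' g h"
  shows "\<forall>g\<in>G. \<forall>h\<in>G. B g h - B' g h = td1 w g h"
proof (intro ballI)
  fix g h assume g: "g\<in>G" and h: "h\<in>G"
  show "B g h - B' g h = td1 w g h"
    by (rule L1[OF q0, of g h c c' a w]) (use w B B' g h mult_in in auto)
qed

lemma cl1: "cocycle1 G Mhat f \<Longrightarrow> cocycle1 G (Mq q) (redq q f)"
proof -
  assume f: "cocycle1 G Mhat f"
  then have fc: "\<forall>g\<in>G. f g \<in> Mhat_car" and fe: "\<forall>g\<in>G. \<forall>h\<in>G. Abs_mh (f (g**h)) = Abs_mh (f g) + act g (Abs_mh (f h))"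
    by (auto simp: coc1_hat)
  have r: "redq q f g = lev q (Abs_mh (f g))" if "g\<in>G" for g
    using fc that by (simp add: redq_def Abs_Rep_lev)
  show ?thesis unfolding coc1_q
  proof (intro conjI ballI)
    fix g assume g: "g\<in>G" show "vmod (redq q f g) (int q) = redq q f g" using r[OF g] q0 by simp
  next
    fix g h assume g: "g\<in>G" and h: "h\<in>G"
    show "qdiv q (td1 (\<lambda>k. io (redq q f k)) g h)"
    proof (rule qdiv_td1_cong[of g h _ "\<lambda>k. Abs_mh (f k)"])
      fix k assume "k \<in> {g, h, g**h}"
      then have "k\<in>G" using g h mult_in by auto
      then show "qdiv q (io (redq q f k) - Abs_mh (f k))" using r qdiv_io_lev[OF q0] by simp
    next
      have "td1 (\<lambda>k. Abs_mh (f k)) g h = 0" using fe g h by (simp add: td1_def)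
      then show "qdiv q (td1 (\<lambda>k. Abs_mh (f k)) g h)" by (simp add: qdiv_zero)
    qed
  qed
qed

lemma cl2: assumes f: "cocycle1 G Mhat f" and f': "cocycle1 G Mhat f'" and c: "cohomologous1 G Mhat f f'"
  shows "cohomologous1 G (Mq q) (redq q f) (redq q f')"
proof -
  have fc: "\<forall>g\<in>G. f g \<in> Mhat_car" "\<forall>g\<in>G. f' g \<in> Mhat_car" using f f' by (auto simp: coc1_hat)
  obtain a where a: "\<forall>g\<in>G. Abs_mh (f g) - Abs_mh (f' g) = act g a - a" using c coh1_hat[OF fc] by blast
  have r: "redq q f g = lev q (Abs_mh (f g))" "redq q f' g = lev q (Abs_mh (f' g))" if "g\<in>G" for g
    using fc that by (simp_all add: redq_def Abs_Rep_lev)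
  have red: "\<forall>g\<in>G. vmod (redq q f g) (int q) = redq q f g" "\<forall>g\<in>G. vmod (redq q f' g) (int q) = redq q f' g"
    using r q0 by simp_all
  show ?thesis unfolding coh1_q[OF red]
  proof (intro exI[of _ a] ballI)
    fix g assume g: "g\<in>G"
    have "io (redq q f g) - io (redq q f' g) - (act g a - a) =
      (io (lev q (Abs_mh (f g))) - Abs_mh (f g)) - (io (lev q (Abs_mh (f' g))) - Abs_mh (f' g))
      + (Abs_mh (f g) - Abs_mh (f' g) - (act g a - a))" using r g by (simp add: algebra_simps)
    also have "\<dots> = (io (lev q (Abs_mh (f g))) - Abs_mh (f g)) - (io (lev q (Abs_mh (f' g))) - Abs_mh (f' g))"
      using a g by simp
    finally show "qdiv q (io (redq q f g) - io (redq q f' g) - (act g a - a))"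
      by (simp add: qdiv_diff qdiv_io_lev[OF q0])
  qed
qed

lemma cl3: assumes f: "cocycle1 G Mhat f" and f': "cocycle1 G Mhat f'"
  shows "cohomologous1 G (Mq q) (redq q (\<lambda>g. hadd (f g) (f' g))) (\<lambda>g. madd (Mq q) (redq q f g) (redq q f' g))"
  by (rule coh1_q_refl) (use q0 in \<open>auto simp: redq_def\<close>)


lemma zcoc: assumes "cocycle1 G (Mq q) z"
  shows "\<forall>g\<in>G. vmod (z g) (int q) = z g" "\<forall>g\<in>G. \<forall>h\<in>G. qdiv q (td1 (\<lambda>k. io (z k)) g h)"
  using assms by (auto simp: coc1_q)

lemma beta_in: "cocycle1 G (Mq q) z \<Longrightarrow> \<forall>g\<in>G. \<forall>h\<in>G. beta q z g h \<in> Mhat_car"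
  using Bz(2) zcoc by simp

lemma Abs_beta: "cocycle1 G (Mq q) z \<Longrightarrow> g\<in>G \<Longrightarrow> h\<in>G \<Longrightarrow> Abs_mh (beta q z g h) = Bz z g h"
  using Bz(2) zcoc by (simp add: Rep_mh_inverse)

lemma hsBz: "cocycle1 G (Mq q) z \<Longrightarrow> \<forall>g\<in>G. \<forall>h\<in>G. hs q (Bz z g h) = td1 (\<lambda>k. io (z k)) g h"
  using Bz(1) zcoc by simp

lemma cl4: assumes z: "cocycle1 G (Mq q) z" shows "cocycle2 G Mhat (beta q z)"
  unfolding coc2_hat
proof (intro conjI ballI)
  fix g h assume "g\<in>G" "h\<in>G" then show "beta q z g h \<in> Mhat_car" using beta_in[OF z] by blast
next
  fix g h k assume g: "g\<in>G" and h: "h\<in>G" and k: "k\<in>G"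
  show "act g (Abs_mh (beta q z h k)) + Abs_mh (beta q z g (h ** k)) =
        Abs_mh (beta q z (g ** h) k) + Abs_mh (beta q z g h)"
  proof (rule hs_inj[OF q0])
    let ?Z = "\<lambda>k. io (z k)"
    have e: "hs q (Bz z h k) = td1 ?Z h k" "hs q (Bz z g (h**k)) = td1 ?Z g (h**k)"
      "hs q (Bz z (g**h) k) = td1 ?Z (g**h) k" "hs q (Bz z g h) = td1 ?Z g h"
      using hsBz[OF z] g h k mult_in by auto
    have "hs q (act g (Bz z h k) + Bz z g (h ** k)) = act g (td1 ?Z h k) + td1 ?Z g (h**k)"
      by (simp only: hs_add hs_act e)
    also have "\<dots> = td1 ?Z (g**h) k + td1 ?Z g h"
      by (simp add: td1_def algebra_simps matrix_mul_assoc)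
    also have "\<dots> = hs q (Bz z (g ** h) k + Bz z g h)" by (simp only: hs_add e)
    finally have "hs q (act g (Bz z h k) + Bz z g (h ** k)) = hs q (Bz z (g ** h) k + Bz z g h)" .
    then show "hs q (act g (Abs_mh (beta q z h k)) + Abs_mh (beta q z g (h ** k))) =
        hs q (Abs_mh (beta q z (g ** h) k) + Abs_mh (beta q z g h))"
      using g h k mult_in by (simp add: Abs_beta[OF z])
  qed
qed

lemma cl5: assumes z: "cocycle1 G (Mq q) z" and z': "cocycle1 G (Mq q) z'" and c: "cohomologous1 G (Mq q) z z'"
  shows "cohomologous2 G Mhat (beta q z) (beta q z')"
proof -
  obtain a where a: "\<forall>g\<in>G. qdiv q (io (z g) - io (z' g) - (act g a - a))"
    using c coh1_q[OF zcoc(1)[OF z] zcoc(1)[OF z']] by blast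
  obtain w where w: "\<forall>g\<in>G. io (z g) - io (z' g) - (act g a - a) = hs q (w g)" using w_choice[OF a] by blast
  have "\<forall>g\<in>G. \<forall>h\<in>G. Bz z g h - Bz z' g h = td1 w g h"
    by (rule L1G[OF w hsBz[OF z] hsBz[OF z']])
  then show ?thesis
    by (subst coh2_hat[OF beta_in[OF z] beta_in[OF z']]) (auto simp: Abs_beta z z' intro!: exI[of _ w])
qed

lemma cl6: assumes z: "cocycle1 G (Mq q) z" and z': "cocycle1 G (Mq q) z'"
  shows "cohomologous2 G Mhat (beta q (\<lambda>g. madd (Mq q) (z g) (z' g)))
                                  (\<lambda>g h. hadd (beta q z g h) (beta q z' g h))"
proof -
  define z2 where "z2 g = vmod (z g + z' g) (int q)" for g
  have z2e: "(\<lambda>g. madd (Mq q) (z g) (z' g)) = z2" by (simp add: z2_def[abs_def])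
  have dd: "qdiv q (io (z2 k) - (io (z k) + io (z' k)))" for k
  proof -
    have "lev q (io (z2 k)) = lev q (io (z k) + io (z' k))" using q0 by (simp add: z2_def)
    then show ?thesis using lev_eq_iff[OF q0] by blast
  qed
  have z2: "cocycle1 G (Mq q) z2" unfolding coc1_q
  proof (intro conjI ballI)
    fix g show "vmod (z2 g) (int q) = z2 g" by (simp add: z2_def)
  next
    fix g h assume g: "g\<in>G" and h: "h\<in>G"
    show "qdiv q (td1 (\<lambda>k. io (z2 k)) g h)"
    proof (rule qdiv_td1_cong[of g h _ "\<lambda>k. io (z k) + io (z' k)"])
      show "qdiv q (io (z2 k) - (io (z k) + io (z' k)))" for k by (rule dd)
      have "td1 (\<lambda>k. io (z k) + io (z' k)) g h = td1 (\<lambda>k. io (z k)) g h + td1 (\<lambda>k. io (z' k)) g h"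
        by (simp add: td1_add)
      then show "qdiv q (td1 (\<lambda>k. io (z k) + io (z' k)) g h)"
        using zcoc(2)[OF z] zcoc(2)[OF z'] g h by (simp add: qdiv_add)
    qed
  qed
  obtain w where w: "\<forall>g\<in>G. io (z2 g) - (io (z g) + io (z' g)) - (act g 0 - 0) = hs q (w g)"
    using w_choice[of "\<lambda>g. io (z2 g) - (io (z g) + io (z' g)) - (act g 0 - 0)"] dd by auto
  have B': "\<forall>g\<in>G. \<forall>h\<in>G. hs q (Bz z g h + Bz z' g h) = td1 (\<lambda>k. io (z k) + io (z' k)) g h"
    using hsBz[OF z] hsBz[OF z'] by (simp add: td1_add)
  have L: "\<forall>g\<in>G. \<forall>h\<in>G. Bz z2 g h - (Bz z g h + Bz z' g h) = td1 w g h"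
    by (rule L1G[OF w hsBz[OF z2] B'])
  have inn: "\<forall>g\<in>G. \<forall>h\<in>G. hadd (beta q z g h) (beta q z' g h) \<in> Mhat_car"
    using beta_in[OF z] beta_in[OF z'] by (simp add: hadd_in)
  show ?thesis unfolding z2e
    by (subst coh2_hat[OF beta_in[OF z2] inn])
       (use L in \<open>auto simp: Abs_beta z z' z2 Abs_hadd beta_in intro!: exI[of _ w]\<close>)
qed

lemma cl7: assumes z: "cocycle1 G (Mq q) z"
  shows "coboundary2 G Mhat (beta q z) \<longleftrightarrow> (\<exists>f. cocycle1 G Mhat f \<and> cohomologous1 G (Mq q) z (redq q f))"
proof
  assume "coboundary2 G Mhat (beta q z)"
  then obtain c where c: "\<forall>g\<in>G. \<forall>h\<in>G. Bz z g h = td1 c g h"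
    using cob2_hat[OF beta_in[OF z]] Abs_beta[OF z] by auto
  define F where "F g = io (z g) - hs q (c g)" for g
  have Fe: "F (g**h) = F g + act g (F h)" if g: "g\<in>G" and h: "h\<in>G" for g h
  proof -
    have "td1 (\<lambda>k. io (z k)) g h = td1 (\<lambda>k. hs q (c k)) g h"
      using hsBz[OF z] c g h by (simp add: hs_td1)
    then have "F (g**h) - (F g + act g (F h)) = 0"
      by (simp add: F_def td1_def algebra_simps)
    then show ?thesis by simp
  qed
  have fcoc: "cocycle1 G Mhat (\<lambda>g. Rep_mh (F g))"
    unfolding coc1_hat by (simp add: Rep_mh_inverse Fe)
  have "redq q (\<lambda>g. Rep_mh (F g)) g = z g" if g: "g\<in>G" for g
  proof -
    have "redq q (\<lambda>g. Rep_mh (F g)) g = lev q (F g)" by (simp add: redq_def Rep_lev)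
    also have "\<dots> = lev q (io (z g))"
      using lev_eq_iff[OF q0, of "io (z g) - hs q (c g)" "io (z g)"] by (simp add: F_def qdiv_minus_iff qdiv_hs)
    also have "\<dots> = z g" using zcoc(1)[OF z] g q0 by simp
    finally show ?thesis .
  qed
  then have "cohomologous1 G (Mq q) z (redq q (\<lambda>g. Rep_mh (F g)))"
    using zcoc(1)[OF z] by (intro coh1_q_refl) auto
  then show "\<exists>f. cocycle1 G Mhat f \<and> cohomologous1 G (Mq q) z (redq q f)" using fcoc by blast
next
  assume "\<exists>f. cocycle1 G Mhat f \<and> cohomologous1 G (Mq q) z (redq q f)"
  then obtain f where f: "cocycle1 G Mhat f" and c: "cohomologous1 G (Mq q) z (redq q f)" by blast
  have fc: "\<forall>g\<in>G. f g \<in> Mhat_car" and fe: "\<forall>g\<in>G. \<forall>h\<in>G. Abs_mh (f (g**h)) = Abs_mh (f g) + act g (Abs_mh (f h))"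
    using f by (auto simp: coc1_hat)
  have r: "redq q f g = lev q (Abs_mh (f g))" if "g\<in>G" for g
    using fc that by (simp add: redq_def Abs_Rep_lev)
  have red: "\<forall>g\<in>G. vmod (redq q f g) (int q) = redq q f g" using r q0 by simp
  obtain a where a: "\<forall>g\<in>G. qdiv q (io (z g) - io (redq q f g) - (act g a - a))"
    using c coh1_q[OF zcoc(1)[OF z] red] by blast
  have a2: "\<forall>g\<in>G. qdiv q (io (z g) - Abs_mh (f g) - (act g a - a))"
  proof
    fix g assume g: "g\<in>G"
    have e: "io (z g) - Abs_mh (f g) - (act g a - a) = (io (z g) - io (redq q f g) - (act g a - a))
       + (io (lev q (Abs_mh (f g))) - Abs_mh (f g))" using r g by simp
    have "qdiv q ((io (z g) - io (redq q f g) - (act g a - a)) + (io (lev q (Abs_mh (f g))) - Abs_mh (f g)))"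
      using a g by (intro qdiv_add qdiv_io_lev[OF q0]) auto
    then show "qdiv q (io (z g) - Abs_mh (f g) - (act g a - a))" by (simp only: e)
  qed
  obtain w where w: "\<forall>g\<in>G. io (z g) - Abs_mh (f g) - (act g a - a) = hs q (w g)" using w_choice[OF a2] by blast
  have B': "\<forall>g\<in>G. \<forall>h\<in>G. hs q 0 = td1 (\<lambda>k. Abs_mh (f k)) g h" using fe by (simp add: td1_def)
  have "\<forall>g\<in>G. \<forall>h\<in>G. Bz z g h - 0 = td1 w g h" by (rule L1G[OF w hsBz[OF z] B'])
  then show "coboundary2 G Mhat (beta q z)"
    by (subst cob2_hat[OF beta_in[OF z]]) (auto simp: Abs_beta z intro!: exI[of _ w])
qed

lemma cl8: assumes e: "cocycle2 G Mhat \<eta>"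
  shows "\<exists>z. cocycle1 G (Mq q) z \<and> cohomologous2 G Mhat \<eta> (beta q z)"
proof -
  have ec: "\<forall>g\<in>G. \<forall>h\<in>G. \<eta> g h \<in> Mhat_car"
    and ee: "\<forall>g\<in>G. \<forall>h\<in>G. \<forall>k\<in>G. act g (Abs_mh (\<eta> h k)) + Abs_mh (\<eta> g (h**k)) = Abs_mh (\<eta> (g**h) k) + Abs_mh (\<eta> g h)"
    using e by (auto simp: coc2_hat)
  obtain c where c: "\<forall>g\<in>G. \<forall>h\<in>G. hs q (Abs_mh (\<eta> g h)) = td1 c g h"
    using torsion[OF expo q0 ee] by blast
  define z where "z g = lev q (c g)" for g
  have dd: "qdiv q (c k - io (z k))" for k
    using qdiv_minus[OF qdiv_io_lev[OF q0, of "c k"]] by (simp add: z_def)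
  have z: "cocycle1 G (Mq q) z" unfolding coc1_q
  proof (intro conjI ballI)
    fix g show "vmod (z g) (int q) = z g" using q0 by (simp add: z_def)
  next
    fix g h assume g: "g\<in>G" and h: "h\<in>G"
    show "qdiv q (td1 (\<lambda>k. io (z k)) g h)"
    proof (rule qdiv_td1_cong[of g h _ c])
      show "qdiv q (io (z k) - c k)" for k by (simp add: z_def qdiv_io_lev[OF q0])
      show "qdiv q (td1 c g h)" using c g h unfolding qdiv_def by (intro exI[of _ "Abs_mh (\<eta> g h)"]) simp
    qed
  qed
  obtain w where w: "\<forall>g\<in>G. c g - io (z g) - (act g 0 - 0) = hs q (w g)"
    using w_choice[of "\<lambda>g. c g - io (z g) - (act g 0 - 0)"] dd by auto
  have "\<forall>g\<in>G. \<forall>h\<in>G. Abs_mh (\<eta> g h) - Bz z g h = td1 w g h" by (rule L1G[OF w c hsBz[OF z]])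
  then have "cohomologous2 G Mhat \<eta> (beta q z)"
    by (subst coh2_hat[OF ec beta_in[OF z]]) (auto simp: Abs_beta z intro!: exI[of _ w])
  then show ?thesis using z by blast
qed


lemma axis_mv: "((A::int^'n^'m) *v axis j 1) $ i = A $ i $ j"
  by (simp add: matrix_vector_mult_def axis_def if_distrib cong: if_cong)

lemma faithful:
  fixes A B :: "int^'n^'m"
  assumes "\<forall>v. \<forall>n>0. vmod (A *v v) (int n) = vmod (B *v v) (int n)"
  shows "A = B"
proof -
  have "(A *v v) $ i = (B *v v) $ i" for v i
  proof -
    define a where "a = (A *v v) $ i"
    define b where "b = (B *v v) $ i"
    define n where "n = nat \<bar>a - b\<bar> + 1"
    have "0 < n" by (simp add: n_def)
    then have "vmod (A *v v) (int n) = vmod (B *v v) (int n)" using assms by blast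
    then have "a mod int n = b mod int n" by (simp add: a_def b_def vec_eq_iff)
    then have d: "int n dvd a - b" by (simp add: mod_eq_dvd_iff)
    have "\<bar>a - b\<bar> < int n" by (simp add: n_def)
    then have "a - b = 0" using d by (metis dvd_imp_le_int abs_of_nat linorder_not_le)
    then show ?thesis by (simp add: a_def b_def)
  qed
  then have "A $ i $ j = B $ i $ j" for i j using axis_mv by metis
  then show ?thesis by (simp add: vec_eq_iff)
qed

end

locale phictx = setting G q for G :: "(int^'d::finite^'d) set" and q +
  fixes \<phi> :: "(nat \<Rightarrow> int^'d) \<Rightarrow> (nat \<Rightarrow> int^'d)"
  assumes phiN: "\<phi> \<in> NAut G"
begin

lemma phi_aut: "\<phi> \<in> AutMhat" using phiN unfolding NAut_def by blast
lemma phi_add: "x \<in> Mhat_car \<Longrightarrow> y \<in> Mhat_car \<Longrightarrow> \<phi> (hadd x y) = hadd (\<phi> x) (\<phi> y)"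
  using phi_aut unfolding AutMhat_def by blast
lemma phi_bij: "bij_betw \<phi> Mhat_car Mhat_car" using phi_aut unfolding AutMhat_def by blast
lemma phi_in: "x \<in> Mhat_car \<Longrightarrow> \<phi> x \<in> Mhat_car" by (rule bij_betw_apply[OF phi_bij])
lemma phi_inj: "x \<in> Mhat_car \<Longrightarrow> y \<in> Mhat_car \<Longrightarrow> \<phi> x = \<phi> y \<Longrightarrow> x = y"
  using phi_bij by (auto simp: bij_betw_def inj_on_def)

definition Phi :: "'d mh \<Rightarrow> 'd mh" where "Phi x = Abs_mh (\<phi> (Rep_mh x))"

lemma Rep_Phi: "Rep_mh (Phi x) = \<phi> (Rep_mh x)"
  by (simp add: Phi_def phi_in)
lemma Phi_add[simp]: "Phi (x + y) = Phi x + Phi y"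
  by (simp add: Phi_def plus_mh.rep_eq phi_add Abs_hadd phi_in)
lemma Phi_zero[simp]: "Phi 0 = 0"
proof -
  have "Phi 0 + Phi 0 = Phi 0 + 0" by (metis Phi_add add_0_right)
  then show ?thesis by simp
qed
lemma Phi_minus[simp]: "Phi (- x) = - Phi x"
proof -
  have "Phi (- x) + Phi x = 0" by (metis Phi_add Phi_zero left_minus)
  then show ?thesis by (simp add: eq_neg_iff_add_eq_0)
qed
lemma Phi_diff[simp]: "Phi (x - y) = Phi x - Phi y"
  by (simp only: diff_conv_add_uminus Phi_add Phi_minus)
lemma Phi_hs[simp]: "Phi (hs k x) = hs k (Phi x)"
  by (induction k) (simp_all add: hs_Suc)
lemma Phi_inj: "Phi x = Phi y \<Longrightarrow> x = y"
  unfolding Phi_def by (metis Abs_inj Rep_mh_inject phi_in Rep_in phi_inj)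
lemma Phi_lev: "lev q x = lev q y \<Longrightarrow> lev q (Phi x) = lev q (Phi y)"
proof -
  assume "lev q x = lev q y"
  then obtain w where "x - y = hs q w" using lev_eq_iff[OF q0] qdiv_def by blast
  then have "Phi x - Phi y = hs q (Phi w)" by (metis Phi_diff Phi_hs)
  then show ?thesis using lev_eq_iff[OF q0] qdiv_def by blast
qed

lemma conj_ex: "g \<in> G \<Longrightarrow> \<exists>!g'. g' \<in> G \<and> (\<forall>x\<in>Mhat_car. \<phi> (hact g' x) = hact g (\<phi> x))"
proof -
  assume g: "g \<in> G"
  obtain g' where g': "g' \<in> G" "\<forall>x\<in>Mhat_car. \<phi> (hact g' x) = hact g (\<phi> x)"
    using phiN g by (auto simp: NAut_def)
  moreover have "g2 = g'" if "g2 \<in> G" "\<forall>x\<in>Mhat_car. \<phi> (hact g2 x) = hact g (\<phi> x)" for g2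
  proof (rule faithful, intro allI impI)
    fix v :: "int^'d" and n :: nat assume n: "0 < n"
    have "\<phi> (hact g2 (hiota v)) = hact g (\<phi> (hiota v))" using that(2) hiota_in by blast
    moreover have "\<phi> (hact g' (hiota v)) = hact g (\<phi> (hiota v))" using g'(2) hiota_in by blast
    ultimately have "\<phi> (hact g2 (hiota v)) = \<phi> (hact g' (hiota v))" by simp
    then have "hact g2 (hiota v) = hact g' (hiota v)" by (rule phi_inj[OF hact_in[OF hiota_in] hact_in[OF hiota_in]])
    then have "hact g2 (hiota v) n = hact g' (hiota v) n" by simp
    then show "vmod (g2 *v v) (int n) = vmod (g' *v v) (int n)" using n by simp
  qed
  ultimately show ?thesis by blast
qed

lemma conjG: assumes g: "g \<in> G"
  shows "conjG G \<phi> g \<in> G" "\<forall>x\<in>Mhat_car. \<phi> (hact (conjG G \<phi> g) x) = hact g (\<phi> x)"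
  using theI'[OF conj_ex[OF g]] unfolding conjG_def by auto

lemma conjG_unique: "g \<in> G \<Longrightarrow> g' \<in> G \<Longrightarrow> \<forall>x\<in>Mhat_car. \<phi> (hact g' x) = hact g (\<phi> x) \<Longrightarrow> conjG G \<phi> g = g'"
  unfolding conjG_def using conj_ex by (intro the1_equality) auto

lemma Phi_act: "g \<in> G \<Longrightarrow> Phi (act (conjG G \<phi> g) x) = act g (Phi x)"
  unfolding Phi_def using conjG(2)[of g]
  by (simp add: act.rep_eq Abs_hact phi_in)

lemma conjG_mult: assumes g: "g\<in>G" and h: "h\<in>G"
  shows "conjG G \<phi> (g ** h) = conjG G \<phi> g ** conjG G \<phi> h"
proof (rule conjG_unique)
  show "g ** h \<in> G" "conjG G \<phi> g ** conjG G \<phi> h \<in> G" using g h conjG(1) mult_in by auto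
  show "\<forall>x\<in>Mhat_car. \<phi> (hact (conjG G \<phi> g ** conjG G \<phi> h) x) = hact (g ** h) (\<phi> x)"
  proof
    fix x :: "nat \<Rightarrow> int^'d" assume x: "x \<in> Mhat_car"
    have e: "hact (A ** B) y = hact A (hact B y)" if "y \<in> Mhat_car" for A B y
    proof -
      have "Abs_mh (hact (A ** B) y) = Abs_mh (hact A (hact B y))"
        using that by (simp add: Abs_hact hact_in)
      then show ?thesis using that by (simp add: Abs_inj hact_in)
    qed
    show "\<phi> (hact (conjG G \<phi> g ** conjG G \<phi> h) x) = hact (g ** h) (\<phi> x)"
      using x conjG(2)[OF g] conjG(2)[OF h] by (simp add: e hact_in phi_in)
  qed
qed


lemma phi_Rep: "\<phi> (Rep_mh x) = Rep_mh (Phi x)" by (simp add: Rep_Phi)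

lemma cl9: assumes f: "cocycle1 G Mhat f"
  shows "cohomologous1 G (Mq q) (redq q (act1hat G \<phi> f)) (act1q q G \<phi> (redq q f))"
proof (rule coh1_q_refl)
  have fc: "\<forall>g\<in>G. f g \<in> Mhat_car" using f by (auto simp: coc1_hat)
  have fr: "f g = Rep_mh (Abs_mh (f g))" if "g\<in>G" for g using fc that by simp
  have L: "redq q (act1hat G \<phi> f) g = lev q (Phi (Abs_mh (f (conjG G \<phi> g))))" if g: "g\<in>G" for g
  proof -
    have e: "f (conjG G \<phi> g) = Rep_mh (Abs_mh (f (conjG G \<phi> g)))" by (rule fr[OF conjG(1)[OF g]])
    show ?thesis unfolding redq_def act1hat_def by (subst e) (simp only: phi_Rep Rep_lev)
  qed
  show "\<forall>g\<in>G. vmod (redq q (act1hat G \<phi> f) g) (int q) = redq q (act1hat G \<phi> f) g"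
    using L q0 by simp
  show "\<forall>g\<in>G. act1q q G \<phi> (redq q f) g = redq q (act1hat G \<phi> f) g"
  proof
    fix g assume g: "g\<in>G"
    let ?y = "Abs_mh (f (conjG G \<phi> g))"
    have e: "f (conjG G \<phi> g) = Rep_mh ?y" by (rule fr[OF conjG(1)[OF g]])
    have "act1q q G \<phi> (redq q f) g = lev q (Phi (io (lev q ?y)))"
      unfolding act1q_def phiq_def redq_def by (subst e) (simp only: Rep_hiota phi_Rep Rep_lev)
    also have "\<dots> = lev q (Phi ?y)" by (rule Phi_lev) (use q0 in simp)
    finally show "act1q q G \<phi> (redq q f) g = redq q (act1hat G \<phi> f) g" using L[OF g] by simp
  qed
qed

lemma cl10: assumes z: "cocycle1 G (Mq q) z"
  shows "cohomologous2 G Mhat (beta q (act1q q G \<phi> z)) (act2hat G \<phi> (beta q z))"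
proof -
  define cg where "cg g = conjG G \<phi> g" for g
  have cgG: "g\<in>G \<Longrightarrow> cg g \<in> G" for g using conjG(1) by (simp add: cg_def)
  define Z where "Z k = io (z k)" for k
  define z1 where "z1 = act1q q G \<phi> z"
  have z1e: "z1 g = lev q (Phi (Z (cg g)))" for g
    by (simp add: z1_def act1q_def phiq_def Rep_hiota phi_Rep Rep_lev cg_def Z_def)
  define c' where "c' g = Phi (Z (cg g))" for g
  define B' where "B' g h = Phi (Bz z (cg g) (cg h))" for g h
  have td: "td1 c' g h = Phi (td1 Z (cg g) (cg h))" if g: "g\<in>G" and h: "h\<in>G" for g h
    using g h by (simp add: td1_def c'_def cg_def conjG_mult Phi_act[symmetric])
  have hsB': "\<forall>g\<in>G. \<forall>h\<in>G. hs q (B' g h) = td1 c' g h"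
    using hsBz[OF z] cgG by (simp add: B'_def td Z_def[abs_def] Phi_hs[symmetric] del: Phi_hs)
  have dd: "qdiv q (io (z1 k) - c' k)" for k
    by (simp add: z1e c'_def qdiv_io_lev[OF q0])
  have z1c: "cocycle1 G (Mq q) z1" unfolding coc1_q
  proof (intro conjI ballI)
    fix g show "vmod (z1 g) (int q) = z1 g" using q0 by (simp add: z1e)
  next
    fix g h assume g: "g\<in>G" and h: "h\<in>G"
    show "qdiv q (td1 (\<lambda>k. io (z1 k)) g h)"
    proof (rule qdiv_td1_cong[of g h _ c'])
      show "qdiv q (io (z1 k) - c' k)" for k by (rule dd)
      show "qdiv q (td1 c' g h)" using hsB' g h unfolding qdiv_def by (metis)
    qed
  qed
  obtain w where w: "\<forall>g\<in>G. io (z1 g) - c' g - (act g 0 - 0) = hs q (w g)"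
    using w_choice[of "\<lambda>g. io (z1 g) - c' g - (act g 0 - 0)"] dd by auto
  have L: "\<forall>g\<in>G. \<forall>h\<in>G. Bz z1 g h - B' g h = td1 w g h" by (rule L1G[OF w hsBz[OF z1c] hsB'])
  have a2: "act2hat G \<phi> (beta q z) g h = Rep_mh (B' g h)" if g: "g\<in>G" and h: "h\<in>G" for g h
    using Bz(2)[OF zcoc(2)[OF z, rule_format, OF cgG[OF g] cgG[OF h]]]
    by (simp add: act2hat_def B'_def cg_def phi_Rep)
  have inn: "\<forall>g\<in>G. \<forall>h\<in>G. act2hat G \<phi> (beta q z) g h \<in> Mhat_car" using a2 by simp
  show ?thesis unfolding z1_def[symmetric]
    by (subst coh2_hat[OF beta_in[OF z1c] inn])
       (use L in \<open>auto simp: Abs_beta z1c a2 Rep_mh_inverse intro!: exI[of _ w]\<close>)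
qed


lemma mpow_in: "A \<in> G \<Longrightarrow> mpow A n \<in> G"
  by (induction n) (simp_all add: oneG mult_in)

lemma finite_order: assumes A: "A \<in> G" shows "\<exists>r>0. mpow A r = mat 1"
proof -
  have "range (mpow A) \<subseteq> G" using mpow_in A by auto
  then have "finite (range (mpow A))" using finG finite_subset by blast
  then have "\<not> inj (mpow A)" using finite_imageD infinite_UNIV_nat by blast
  then obtain i j where ij: "i \<noteq> j" "mpow A i = mpow A j" by (auto simp: inj_def)
  obtain a b where ab: "a < b" "mpow A a = mpow A b" using ij by (metis linorder_neq_iff)
  have e1: "mpow A a ** mpow A (b - a) = mpow A b" using ab(1) mpow_add[of A a "b-a"] by simp
  then have "mpow A a ** mat 1 = mpow A a ** mpow A (b - a)" using ab(2) by simp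
  then have "mpow A (b - a) = mat 1" using lcancel[OF mpow_in[OF A]] by metis
  then show ?thesis using ab(1) by (intro exI[of _ "b - a"]) simp
qed

lemma cl11: assumes triv: "\<forall>x\<in>Mhat_car. \<phi> x q = x q" and e: "cocycle2 G Mhat \<eta>"
  shows "cohomologous2 G Mhat (act2hat G \<phi> \<eta>) \<eta>"
proof -
  have levP: "lev q (Phi x) = lev q x" for x
    using triv by (simp add: Rep_lev[symmetric] Rep_Phi)
  have cg: "conjG G \<phi> g = g" if g: "g\<in>G" for g
  proof -
    define g' where "g' = conjG G \<phi> g"
    have g': "g' \<in> G" using conjG(1)[OF g] by (simp add: g'_def)
    have vv: "vmod (g' *v v) (int q) = vmod (g *v v) (int q)" for v
    proof -
      have "vmod (g' *v v) (int q) = lev q (act g' (io v))" using q0 by simp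
      also have "\<dots> = lev q (Phi (act g' (io v)))" by (simp only: levP)
      also have "\<dots> = lev q (act g (Phi (io v)))" using Phi_act[OF g] by (simp add: g'_def)
      also have "\<dots> = vmod (g *v v) (int q)" using q0 by (simp add: levP)
      finally show ?thesis .
    qed
    have ent: "int q dvd g' $ k $ j - g $ k $ j" for k j
    proof -
      have "vmod (g' *v axis j 1) (int q) $ k = vmod (g *v axis j 1) (int q) $ k" using vv by simp
      then have "g' $ k $ j mod int q = g $ k $ j mod int q" by (simp add: axis_mv)
      then show ?thesis by (simp add: mod_eq_dvd_iff)
    qed
    obtain h where h: "h \<in> G" "h ** g = mat 1" "g ** h = mat 1" using linv[OF g] by blast
    define A where "A = h ** g'"
    have AG: "A \<in> G" using h g' mult_in by (simp add: A_def)
    have cong: "\<forall>i j. int q dvd (A$i$j - mat 1$i$j)"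
    proof (intro allI)
      fix i j
      have "A$i$j - mat 1$i$j = (h ** g')$i$j - (h ** g)$i$j" using h by (simp add: A_def)
      also have "\<dots> = (\<Sum>k\<in>UNIV. h$i$k * (g'$k$j - g$k$j))"
        by (simp add: matrix_matrix_mult_def sum_subtractf algebra_simps)
      finally show "int q dvd (A$i$j - mat 1$i$j)" using ent by (simp add: dvd_sum)
    qed
    obtain r where r: "r > 0" "mpow A r = mat 1" using finite_order[OF AG] by blast
    have "A = mat 1" by (rule minkowski[OF q3 cong r(2) r(1)])
    then have "g ** (h ** g') = g" by (simp add: A_def)
    then show ?thesis using h(3) by (simp add: matrix_mul_assoc g'_def)
  qed
  have PA: "Phi (act g x) = act g (Phi x)" if "g\<in>G" for g x
    using Phi_act[OF that] cg[OF that] by simp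
  have Ptd: "Phi (td1 c g h) = td1 (\<lambda>k. Phi (c k)) g h" if "g\<in>G" for c g h
    using PA[OF that] by (simp add: td1_def)
  have ec: "\<forall>g\<in>G. \<forall>h\<in>G. \<eta> g h \<in> Mhat_car" using e by (simp add: coc2_hat)
  obtain z where z: "cocycle1 G (Mq q) z" and ch: "cohomologous2 G Mhat \<eta> (beta q z)" using cl8[OF e] by blast
  obtain w where w: "\<forall>g\<in>G. \<forall>h\<in>G. Abs_mh (\<eta> g h) - Bz z g h = td1 w g h"
    using ch coh2_hat[OF ec beta_in[OF z]] Abs_beta[OF z] by auto
  define Z where "Z k = io (z k)" for k
  have "\<forall>k\<in>G. qdiv q (Phi (Z k) - Z k)" using lev_eq_iff[OF q0] levP by blast
  then have "\<exists>u. \<forall>k\<in>G. Phi (Z k) - Z k = hs q (u k)" by (rule w_choice)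
  then obtain u where u: "\<forall>k\<in>G. Phi (Z k) - Z k = hs q (u k)" by blast
  have PB: "Phi (Bz z g h) - Bz z g h = td1 u g h" if g: "g\<in>G" and h: "h\<in>G" for g h
  proof (rule hs_inj[OF q0])
    have "hs q (Phi (Bz z g h) - Bz z g h) = Phi (td1 Z g h) - td1 Z g h"
      using hsBz[OF z] g h by (simp add: Z_def[abs_def] Phi_hs[symmetric] del: Phi_hs)
    also have "\<dots> = td1 (\<lambda>k. Phi (Z k) - Z k) g h" by (simp add: Ptd[OF g] td1_diff)
    also have "\<dots> = td1 (\<lambda>k. hs q (u k)) g h" using u g h mult_in by (simp add: td1_def)
    finally show "hs q (Phi (Bz z g h) - Bz z g h) = hs q (td1 u g h)" by (simp add: hs_td1)
  qed
  have act2: "act2hat G \<phi> \<eta> g h = Rep_mh (Phi (Abs_mh (\<eta> g h)))" if g: "g\<in>G" and h: "h\<in>G" for g h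
    using cg[OF g] cg[OF h] ec g h by (simp add: act2hat_def phi_Rep[symmetric])
  have inn: "\<forall>g\<in>G. \<forall>h\<in>G. act2hat G \<phi> \<eta> g h \<in> Mhat_car" using act2 by simp
  have "Phi (Abs_mh (\<eta> g h)) - Abs_mh (\<eta> g h) = td1 (\<lambda>k. u k + (Phi (w k) - w k)) g h"
    if g: "g\<in>G" and h: "h\<in>G" for g h
  proof -
    have E: "Abs_mh (\<eta> g h) = Bz z g h + td1 w g h" using w g h by (simp add: algebra_simps)
    have "Phi (Abs_mh (\<eta> g h)) - Abs_mh (\<eta> g h) = (Phi (Bz z g h) - Bz z g h) + (Phi (td1 w g h) - td1 w g h)"
      by (simp add: E algebra_simps)
    also have "\<dots> = td1 u g h + td1 (\<lambda>k. Phi (w k) - w k) g h"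
      by (simp add: PB[OF g h] Ptd[OF g] td1_diff)
    finally show ?thesis by (simp add: td1_add)
  qed
  then show ?thesis
    by (subst coh2_hat[OF inn ec]) (auto simp: act2 Rep_mh_inverse intro!: exI[of _ "\<lambda>k. u k + (Phi (w k) - w k)"])
qed

end

theorem mainTheorem8:
  fixes G :: "(int^'d^'d) set" and q :: nat
  assumes finG: "finite G"
    and oneG: "mat 1 \<in> G"
    and multG: "\<forall>g\<in>G. \<forall>h\<in>G. g ** h \<in> G"
    and invG: "\<forall>g\<in>G. \<exists>h\<in>G. g ** h = mat 1"
    and q3: "q \<ge> 3"
    and expo: "\<forall>f. cocycle2 G (Mint :: (int^'d, int^'d^'d) gmodule) f
                   \<longrightarrow> coboundary2 G (Mint :: (int^'d, int^'d^'d) gmodule) (\<lambda>g h. int q *s f g h)"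
  shows
    \<comment> \<open>reduction H^1(G,Mhat) -> H^1(G,M/qM): well defined homomorphism\<close>
    "(\<forall>f. cocycle1 G Mhat f \<longrightarrow> cocycle1 G (Mq q) (redq q f))
   \<and> (\<forall>f f'. cocycle1 G Mhat f \<longrightarrow> cocycle1 G Mhat f' \<longrightarrow> cohomologous1 G Mhat f f'
        \<longrightarrow> cohomologous1 G (Mq q) (redq q f) (redq q f'))
   \<and> (\<forall>f f'. cocycle1 G Mhat f \<longrightarrow> cocycle1 G Mhat f'
        \<longrightarrow> cohomologous1 G (Mq q) (redq q (\<lambda>g. hadd (f g) (f' g)))
                                  (\<lambda>g. madd (Mq q) (redq q f g) (redq q f' g)))
    \<comment> \<open>connecting map H^1(G,M/qM) -> H^2(G,Mhat): well defined homomorphism\<close>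
   \<and> (\<forall>z. cocycle1 G (Mq q) z \<longrightarrow> cocycle2 G Mhat (beta q z))
   \<and> (\<forall>z z'. cocycle1 G (Mq q) z \<longrightarrow> cocycle1 G (Mq q) z' \<longrightarrow> cohomologous1 G (Mq q) z z'
        \<longrightarrow> cohomologous2 G Mhat (beta q z) (beta q z'))
   \<and> (\<forall>z z'. cocycle1 G (Mq q) z \<longrightarrow> cocycle1 G (Mq q) z'
        \<longrightarrow> cohomologous2 G Mhat (beta q (\<lambda>g. madd (Mq q) (z g) (z' g)))
                                  (\<lambda>g h. hadd (beta q z g h) (beta q z' g h)))
    \<comment> \<open>exactness at H^1(G,M/qM)\<close>
   \<and> (\<forall>z. cocycle1 G (Mq q) z \<longrightarrow>
        (coboundary2 G Mhat (beta q z)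
          \<longleftrightarrow> (\<exists>f. cocycle1 G Mhat f \<and> cohomologous1 G (Mq q) z (redq q f))))
    \<comment> \<open>exactness at H^2(G,Mhat): the connecting map is onto\<close>
   \<and> (\<forall>\<eta>. cocycle2 G Mhat \<eta> \<longrightarrow>
        (\<exists>z. cocycle1 G (Mq q) z \<and> cohomologous2 G Mhat \<eta> (beta q z)))
    \<comment> \<open>compatibility with the actions of the normalizer\<close>
   \<and> (\<forall>\<phi>\<in>NAut G. \<forall>f. cocycle1 G Mhat f \<longrightarrow>
        cohomologous1 G (Mq q) (redq q (act1hat G \<phi> f)) (act1q q G \<phi> (redq q f)))
   \<and> (\<forall>\<phi>\<in>NAut G. \<forall>z. cocycle1 G (Mq q) z \<longrightarrow>
        cohomologous2 G Mhat (beta q (act1q q G \<phi> z)) (act2hat G \<phi> (beta q z)))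
    \<comment> \<open>consequence: N \<inter> ker(Aut(Mhat) -> Aut(M/qM)) acts trivially on H^2(G,Mhat)\<close>
   \<and> (\<forall>\<phi>\<in>NAut G. (\<forall>x\<in>Mhat_car. \<phi> x q = x q) \<longrightarrow>
        (\<forall>\<eta>. cocycle2 G Mhat \<eta> \<longrightarrow> cohomologous2 G Mhat (act2hat G \<phi> \<eta>) \<eta>))"
proof -
  have S: "setting G q"
    by (unfold_locales) (use finG oneG multG invG q3 expo in auto)
  interpret setting G q by (rule S)
  have P: "phictx G q \<phi>" if "\<phi> \<in> NAut G" for \<phi>
    using S that by (simp add: phictx_def phictx_axioms_def)
  show ?thesis
  proof (intro conjI allI impI ballI)
    show "cocycle1 G Mhat f \<Longrightarrow> cocycle1 G (Mq q) (redq q f)" for f by (rule cl1)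
    show "cohomologous1 G (Mq q) (redq q f) (redq q f')"
      if "cocycle1 G Mhat f" "cocycle1 G Mhat f'" "cohomologous1 G Mhat f f'" for f f'
      using that by (rule cl2)
    show "cohomologous1 G (Mq q) (redq q (\<lambda>g. hadd (f g) (f' g))) (\<lambda>g. madd (Mq q) (redq q f g) (redq q f' g))"
      if "cocycle1 G Mhat f" "cocycle1 G Mhat f'" for f f'
      using that by (rule cl3)
    show "cocycle2 G Mhat (beta q z)" if "cocycle1 G (Mq q) z" for z using that by (rule cl4)
    show "cohomologous2 G Mhat (beta q z) (beta q z')"
      if "cocycle1 G (Mq q) z" "cocycle1 G (Mq q) z'" "cohomologous1 G (Mq q) z z'" for z z'
      using that by (rule cl5)
    show "cohomologous2 G Mhat (beta q (\<lambda>g. madd (Mq q) (z g) (z' g))) (\<lambda>g h. hadd (beta q z g h) (beta q z' g h))"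
      if "cocycle1 G (Mq q) z" "cocycle1 G (Mq q) z'" for z z'
      using that by (rule cl6)
    show "coboundary2 G Mhat (beta q z) = (\<exists>f. cocycle1 G Mhat f \<and> cohomologous1 G (Mq q) z (redq q f))"
      if "cocycle1 G (Mq q) z" for z using that by (rule cl7)
    show "\<exists>z. cocycle1 G (Mq q) z \<and> cohomologous2 G Mhat \<eta> (beta q z)"
      if "cocycle2 G Mhat \<eta>" for \<eta> using that by (rule cl8)
    show "cohomologous1 G (Mq q) (redq q (act1hat G \<phi> f)) (act1q q G \<phi> (redq q f))"
      if "\<phi> \<in> NAut G" "cocycle1 G Mhat f" for \<phi> f
      using phictx.cl9[OF P[OF that(1)] that(2)] .
    show "cohomologous2 G Mhat (beta q (act1q q G \<phi> z)) (act2hat G \<phi> (beta q z))"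
      if "\<phi> \<in> NAut G" "cocycle1 G (Mq q) z" for \<phi> z
      using phictx.cl10[OF P[OF that(1)] that(2)] .
    show "cohomologous2 G Mhat (act2hat G \<phi> \<eta>) \<eta>"
      if "\<phi> \<in> NAut G" "\<forall>x\<in>Mhat_car. \<phi> x q = x q" "cocycle2 G Mhat \<eta>" for \<phi> \<eta>
      using phictx.cl11[OF P[OF that(1)] that(2) that(3)] .
  qed
qed

end
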